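(* Let $\alpha$ and $\beta$ be elements of order 3 in the symmetric group $S_6$ that do not belong to the same Sylow 3-subgroup. Then $\alpha\beta$ or $\alpha\beta^2$ is not an element of order 3. *)

theory Defs
  imports "HOL-Algebra.Sym_Groups" "HOL-Algebra.Multiplicative_Group"
    "HOL-Computational_Algebra.Primes"
begin

definition sylow_subgroup :: "nat \<Rightarrow> ('a, 'b) monoid_scheme \<Rightarrow> 'a set \<Rightarrow> bool" where
  "sylow_subgroup p G H \<longleftrightarrow> subgroup H G \<and> card H = p ^ multiplicity p (order G)"

end

theory Submission
  imports Defs "HOL-Combinatorics.Permutations"
begin

definition I6 :: "nat list" where "I6 = [1,2,3,4,5,6]"
definition ap :: "nat list \<Rightarrow> nat \<Rightarrow> nat" where "ap a i = a ! (i - 1)"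
lemma ap_simps: "ap (a#xs) (Suc 0) = a" "ap (a#b#xs) 2 = b" "ap (a#b#c#xs) 3 = c" "ap (a#b#c#d#xs) 4 = d" "ap (a#b#c#d#e#xs) 5 = e" "ap (a#b#c#d#e#f#xs) 6 = f"
  by (simp_all add: ap_def)
definition lc :: "nat list \<Rightarrow> nat list \<Rightarrow> nat list" where "lc a b = map (ap a) b"
definition cube :: "nat list \<Rightarrow> nat list" where "cube a = lc a (lc a a)"
definition valid :: "nat list \<Rightarrow> bool" where
  "valid x \<longleftrightarrow> length x = 6 \<and> distinct x \<and> (\<forall>i\<in>set x. 1 \<le> i \<and> i \<le> 6)"
definition c1l :: "nat list" where "c1l = [2,3,1,4,5,6]"
definition c2l :: "nat list" where "c2l = [2,3,1,5,6,4]"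
definition O3 :: "nat list list" where "O3 = [[1,2,3,5,6,4], [1,2,3,6,4,5], [1,2,4,5,3,6], [1,2,4,6,5,3], [1,2,5,3,4,6], [1,2,5,4,6,3], [1,2,6,3,5,4], [1,2,6,4,3,5], [1,3,4,2,5,6], [1,3,5,4,2,6], [1,3,6,4,5,2], [1,4,2,3,5,6], [1,4,3,5,2,6], [1,4,3,6,5,2], [1,5,2,4,3,6], [1,5,3,2,4,6], [1,5,3,4,6,2], [1,6,2,4,5,3], [1,6,3,2,5,4], [1,6,3,4,2,5], [2,3,1,4,5,6], [2,3,1,5,6,4], [2,3,1,6,4,5], [2,4,3,1,5,6], [2,4,5,1,6,3], [2,4,6,1,3,5], [2,5,3,4,1,6], [2,5,4,6,1,3], [2,5,6,3,1,4], [2,6,3,4,5,1], [2,6,4,5,3,1], [2,6,5,3,4,1], [3,1,2,4,5,6], [3,1,2,5,6,4], [3,1,2,6,4,5], [3,2,4,1,5,6], [3,2,5,4,1,6], [3,2,6,4,5,1], [3,4,5,6,1,2], [3,4,6,5,2,1], [3,5,4,1,6,2], [3,5,6,2,4,1], [3,6,4,1,2,5], [3,6,5,2,1,4], [4,1,3,2,5,6], [4,1,5,2,6,3], [4,1,6,2,3,5], [4,2,1,3,5,6], [4,2,3,5,1,6], [4,2,3,6,5,1], [4,3,5,6,2,1], [4,3,6,5,1,2], [4,5,1,3,6,2], [4,5,2,6,3,1], [4,6,1,3,2,5], [4,6,2,5,1,3], [5,1,3,4,2,6], [5,1,4,6,2,3], [5,1,6,3,2,4], [5,2,1,4,3,6],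 [5,2,3,1,4,6], [5,2,3,4,6,1], [5,3,4,2,6,1], [5,3,6,1,4,2], [5,4,1,6,3,2], [5,4,2,3,6,1], [5,6,1,2,3,4], [5,6,2,1,4,3], [6,1,3,4,5,2], [6,1,4,5,3,2], [6,1,5,3,4,2], [6,2,1,4,5,3], [6,2,3,1,5,4], [6,2,3,4,1,5], [6,3,4,2,1,5], [6,3,5,1,2,4], [6,4,1,5,2,3], [6,4,2,3,1,5], [6,5,1,2,4,3], [6,5,2,1,3,4]]"
definition TT :: "nat list list" where "TT = [[4,5,6,1,2,3], [4,6,5,1,2,3], [3,4,5,1,2,6], [3,4,6,1,2,5], [3,5,4,1,2,6], [3,5,6,1,2,4], [3,6,4,1,2,5], [3,6,5,1,2,4], [2,3,4,1,5,6], [2,3,5,1,4,6], [2,3,6,1,4,5], [2,4,3,1,5,6], [2,4,5,1,3,6], [2,4,6,1,3,5], [2,5,3,1,4,6], [2,5,4,1,3,6], [2,5,6,1,3,4], [2,6,3,1,4,5], [2,6,4,1,3,5], [2,6,5,1,3,4], [1,2,3,4,5,6], [1,2,3,4,5,6], [1,2,3,4,6,5], [1,2,4,3,5,6], [1,2,4,3,5,6], [1,2,4,3,6,5], [1,2,5,3,4,6], [1,2,5,3,4,6], [1,2,5,3,6,4], [1,2,6,3,4,5], [1,2,6,3,4,5], [1,2,6,3,5,4], [1,3,2,4,5,6], [1,3,2,4,5,6], [1,3,2,4,6,5], [1,3,4,2,5,6], [1,3,5,2,4,6], [1,3,6,2,4,5], [1,3,5,2,4,6], [1,3,6,2,4,5],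 [1,3,4,2,5,6], [1,3,6,2,5,4], [1,3,4,2,6,5], [1,3,5,2,6,4], [1,4,2,3,5,6], [1,4,2,3,5,6], [1,4,2,3,6,5], [1,4,3,2,5,6], [1,4,5,2,3,6], [1,4,6,2,3,5], [1,4,6,2,3,5], [1,4,5,2,3,6], [1,4,3,2,5,6], [1,4,6,2,5,3], [1,4,3,2,6,5], [1,4,5,2,6,3], [1,5,2,3,4,6], [1,5,2,3,4,6], [1,5,2,3,6,4], [1,5,3,2,4,6], [1,5,4,2,3,6], [1,5,6,2,3,4], [1,5,6,2,3,4], [1,5,4,2,3,6], [1,5,3,2,4,6], [1,5,6,2,4,3], [1,5,3,2,6,4], [1,5,4,2,6,3], [1,6,2,3,4,5], [1,6,2,3,4,5], [1,6,2,3,5,4], [1,6,3,2,4,5], [1,6,4,2,3,5], [1,6,5,2,3,4], [1,6,5,2,3,4], [1,6,4,2,3,5], [1,6,3,2,4,5], [1,6,5,2,4,3], [1,6,3,2,5,4], [1,6,4,2,5,3]]"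
definition P0 :: "nat list list" where "P0 = [[1,2,3,4,5,6], [1,2,3,5,6,4], [1,2,3,6,4,5], [2,3,1,4,5,6], [2,3,1,5,6,4], [2,3,1,6,4,5], [3,1,2,4,5,6], [3,1,2,5,6,4], [3,1,2,6,4,5]]"
definition SG :: "nat list list" where "SG = [[1,2,3,4,5,6], [1,2,4,3,5,6], [1,2,5,3,4,6], [1,2,6,3,4,5], [1,3,4,2,5,6], [1,3,5,2,4,6], [1,3,6,2,4,5], [1,4,5,2,3,6], [1,4,6,2,3,5], [1,5,6,2,3,4]]"
definition SGI :: "nat list list" where "SGI = [[1,2,3,4,5,6], [1,2,4,3,5,6], [1,2,4,5,3,6], [1,2,4,5,6,3], [1,4,2,3,5,6], [1,4,2,5,3,6], [1,4,2,5,6,3], [1,4,5,2,3,6], [1,4,5,2,6,3], [1,4,5,6,2,3]]"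
definition SYL :: "nat list list list" where "SYL = [[[1,2,3,4,5,6], [1,2,3,5,6,4], [1,2,3,6,4,5], [2,3,1,4,5,6], [2,3,1,5,6,4], [2,3,1,6,4,5], [3,1,2,4,5,6], [3,1,2,5,6,4], [3,1,2,6,4,5]], [[1,2,3,4,5,6], [1,2,5,4,6,3], [1,2,6,4,3,5], [2,4,3,1,5,6], [2,4,5,1,6,3], [2,4,6,1,3,5], [4,1,3,2,5,6], [4,1,5,2,6,3], [4,1,6,2,3,5]], [[1,2,3,4,5,6], [1,2,4,6,5,3], [1,2,6,3,5,4], [2,5,3,4,1,6], [2,5,4,6,1,3], [2,5,6,3,1,4], [5,1,3,4,2,6], [5,1,4,6,2,3], [5,1,6,3,2,4]], [[1,2,3,4,5,6], [1,2,4,5,3,6], [1,2,5,3,4,6], [2,6,3,4,5,1], [2,6,4,5,3,1], [2,6,5,3,4,1], [6,1,3,4,5,2], [6,1,4,5,3,2], [6,1,5,3,4,2]], [[1,2,3,4,5,6], [1,5,3,4,6,2], [1,6,3,4,2,5], [3,2,4,1,5,6], [3,5,4,1,6,2], [3,6,4,1,2,5], [4,2,1,3,5,6], [4,5,1,3,6,2], [4,6,1,3,2,5]], [[1,2,3,4,5,6], [1,4,3,6,5,2], [1,6,3,2,5,4], [3,2,5,4,1,6], [3,4,5,6,1,2], [3,6,5,2,1,4], [5,2,1,4,3,6], [5,4,1,6,3,2], [5,6,1,2,3,4]], [[1,2,3,4,5,6], [1,4,3,5,2,6], [1,5,3,2,4,6], [3,2,6,4,5,1], [3,4,6,5,2,1],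 [3,5,6,2,4,1], [6,2,1,4,5,3], [6,4,1,5,2,3], [6,5,1,2,4,3]], [[1,2,3,4,5,6], [1,3,6,4,5,2], [1,6,2,4,5,3], [4,2,3,5,1,6], [4,3,6,5,1,2], [4,6,2,5,1,3], [5,2,3,1,4,6], [5,3,6,1,4,2], [5,6,2,1,4,3]], [[1,2,3,4,5,6], [1,3,5,4,2,6], [1,5,2,4,3,6], [4,2,3,6,5,1], [4,3,5,6,2,1], [4,5,2,6,3,1], [6,2,3,1,5,4], [6,3,5,1,2,4], [6,5,2,1,3,4]], [[1,2,3,4,5,6], [1,3,4,2,5,6], [1,4,2,3,5,6], [5,2,3,4,6,1], [5,3,4,2,6,1], [5,4,2,3,6,1], [6,2,3,4,1,5], [6,3,4,2,1,5], [6,4,2,3,1,5]]]"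
lemma six: "(x::nat) \<in> {1..6} \<Longrightarrow> x = 1 \<or> x = 2 \<or> x = 3 \<or> x = 4 \<or> x = 5 \<or> x = 6"
  by auto

lemma C1: "list_all2 (\<lambda>a t. valid t \<and> (lc a t = lc t c1l \<or> lc a t = lc t c2l)) O3 TT"
  by (simp add: O3_def TT_def I6_def lc_def valid_def c1l_def c2l_def ap_simps)
lemma C2a: "\<forall>b\<in>set O3. cube (lc c1l b) = I6 \<and> lc c1l b \<noteq> I6 \<and> cube (lc c1l (lc b b)) = I6 \<and> lc c1l (lc b b) \<noteq> I6 \<longrightarrow> (\<exists>S\<in>set SYL. c1l \<in> set S \<and> b \<in> set S)"
  by (simp add: O3_def SYL_def I6_def lc_def cube_def c1l_def ap_simps)
lemma C2b: "\<forall>b\<in>set O3. cube (lc c2l b) = I6 \<and> lc c2l b \<noteq> I6 \<and> cube (lc c2l (lc b b)) = I6 \<and> lc c2l (lc b b) \<noteq> I6 \<longrightarrow> (\<exists>S\<in>set SYL. c2l \<in> set S \<and> b \<in> set S)"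
  by (simp add: O3_def SYL_def I6_def lc_def cube_def c2l_def ap_simps)
lemma C3: "(\<forall>x\<in>set P0. valid x \<and> cube x = I6) \<and> (\<forall>x\<in>set P0. \<forall>y\<in>set P0. lc x y \<in> set P0) \<and> distinct P0 \<and> I6 \<in> set P0 \<and> length P0 = 9"
  by (simp add: P0_def I6_def lc_def cube_def valid_def ap_simps)
lemma C4: "list_all2 (\<lambda>s si. valid s \<and> valid si \<and> lc s si = I6 \<and> lc si s = I6) SG SGI \<and> SYL = map2 (\<lambda>s si. map (\<lambda>x. lc s (lc x si)) P0) SG SGI"
  by (simp add: SYL_def SG_def SGI_def P0_def I6_def lc_def valid_def ap_simps)

lemma enumA:
  fixes f :: "nat \<Rightarrow> nat"
  assumes p: "f permutes {1..6}" and c: "\<And>x. f (f (f x)) = x"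
    and ni: "f 1 \<noteq> 1 \<or> f 2 \<noteq> 2 \<or> f 3 \<noteq> 3 \<or> f 4 \<noteq> 4 \<or> f 5 \<noteq> 5 \<or> f 6 \<noteq> 6"
  shows "map f I6 \<in> set O3"
proof -
  have inj: "\<And>x y. f x = f y \<Longrightarrow> x = y" using permutes_inj[OF p] by (meson injD)
  have v1: "f 1 = 1 \<or> f 1 = 2 \<or> f 1 = 3 \<or> f 1 = 4 \<or> f 1 = 5 \<or> f 1 = 6" using six[of "f 1"] permutes_in_image[OF p, of 1] by simp
  have v2: "f 2 = 1 \<or> f 2 = 2 \<or> f 2 = 3 \<or> f 2 = 4 \<or> f 2 = 5 \<or> f 2 = 6" using six[of "f 2"] permutes_in_image[OF p, of 2] by simp
  have v3: "f 3 = 1 \<or> f 3 = 2 \<or> f 3 = 3 \<or> f 3 = 4 \<or> f 3 = 5 \<or> f 3 = 6" using six[of "f 3"] permutes_in_image[OF p, of 3] by simp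
  have v4: "f 4 = 1 \<or> f 4 = 2 \<or> f 4 = 3 \<or> f 4 = 4 \<or> f 4 = 5 \<or> f 4 = 6" using six[of "f 4"] permutes_in_image[OF p, of 4] by simp
  have v5: "f 5 = 1 \<or> f 5 = 2 \<or> f 5 = 3 \<or> f 5 = 4 \<or> f 5 = 5 \<or> f 5 = 6" using six[of "f 5"] permutes_in_image[OF p, of 5] by simp
  have v6: "f 6 = 1 \<or> f 6 = 2 \<or> f 6 = 3 \<or> f 6 = 4 \<or> f 6 = 5 \<or> f 6 = 6" using six[of "f 6"] permutes_in_image[OF p, of 6] by simp
  have "f 1 = 1 \<or> f 1 = 2 \<or> f 1 = 3 \<or> f 1 = 4 \<or> f 1 = 5 \<or> f 1 = 6" using v1 by auto
  then show ?thesis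
  proof (elim disjE)
    assume h0: "f 1 = 1"
    have n1: "f 2 \<noteq> 1" using inj[of 2 1] h0 by auto
    have "f 2 = 2 \<or> f 2 = 3 \<or> f 2 = 4 \<or> f 2 = 5 \<or> f 2 = 6" using v2 n1 by auto
    then show ?thesis
    proof (elim disjE)
      assume h2: "f 2 = 2"
      have n3: "f 3 \<noteq> 1 \<and> f 3 \<noteq> 2" using inj[of 3 1] inj[of 3 2] h0 h2 by auto
      have "f 3 = 3 \<or> f 3 = 4 \<or> f 3 = 5 \<or> f 3 = 6" using v3 n3 by auto
      then show ?thesis
      proof (elim disjE)
        assume h4: "f 3 = 3"
        have n5: "f 4 \<noteq> 1 \<and> f 4 \<noteq> 2 \<and> f 4 \<noteq> 3" using inj[of 4 1] inj[of 4 2] inj[of 4 3] h0 h2 h4 by auto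
        have "f 4 = 4 \<or> f 4 = 5 \<or> f 4 = 6" using v4 n5 by auto
        then show ?thesis
        proof (elim disjE)
          assume h6: "f 4 = 4"
          have n7: "f 5 \<noteq> 1 \<and> f 5 \<noteq> 2 \<and> f 5 \<noteq> 3 \<and> f 5 \<noteq> 4" using inj[of 5 1] inj[of 5 2] inj[of 5 3] inj[of 5 4] h0 h2 h4 h6 by auto
          have "f 5 = 5 \<or> f 5 = 6" using v5 n7 by auto
          then show ?thesis
          proof (elim disjE)
            assume h8: "f 5 = 5"
            have h9: "f 6 = 6" using v6 inj[of 6 1] h0 inj[of 6 2] h2 inj[of 6 3] h4 inj[of 6 4] h6 inj[of 6 5] h8 by auto
            show ?thesis using ni h0 h2 h4 h6 h8 h9 by simp
          next
            assume h10: "f 5 = 6"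
            have h11: "f 6 = 5" using v6 inj[of 6 1] h0 inj[of 6 2] h2 inj[of 6 3] h4 inj[of 6 4] h6 inj[of 6 5] h10 by auto
            show ?thesis using c[of 5] h10 h11 h10 by simp
          qed
        next
          assume h12: "f 4 = 5"
          have n13: "f 5 \<noteq> 1 \<and> f 5 \<noteq> 2 \<and> f 5 \<noteq> 3 \<and> f 5 \<noteq> 5" using inj[of 5 1] inj[of 5 2] inj[of 5 3] inj[of 5 4] h0 h2 h4 h12 by auto
          have "f 5 = 4 \<or> f 5 = 6" using v5 n13 by auto
          then show ?thesis
          proof (elim disjE)
            assume h14: "f 5 = 4"
            show ?thesis using c[of 4] h12 h14 h12 by simp
          next
            assume h15: "f 5 = 6"
            have h16: "f 6 = 4" using c[of 4] h12 h15 by simp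
            show ?thesis using h0 h2 h4 h12 h15 h16 by (simp add: O3_def I6_def)
          qed
        next
          assume h17: "f 4 = 6"
          have n18: "f 6 \<noteq> 1 \<and> f 6 \<noteq> 2 \<and> f 6 \<noteq> 3 \<and> f 6 \<noteq> 6" using inj[of 6 1] inj[of 6 2] inj[of 6 3] inj[of 6 4] h0 h2 h4 h17 by auto
          have "f 6 = 4 \<or> f 6 = 5" using v6 n18 by auto
          then show ?thesis
          proof (elim disjE)
            assume h19: "f 6 = 4"
            show ?thesis using c[of 4] h17 h19 h17 by simp
          next
            assume h20: "f 6 = 5"
            have h21: "f 5 = 4" using c[of 4] h17 h20 by simp
            show ?thesis using h0 h2 h4 h17 h21 h20 by (simp add: O3_def I6_def)
          qed
        qed
      next
        assume h22: "f 3 = 4"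
        have n23: "f 4 \<noteq> 1 \<and> f 4 \<noteq> 2 \<and> f 4 \<noteq> 4" using inj[of 4 1] inj[of 4 2] inj[of 4 3] h0 h2 h22 by auto
        have "f 4 = 3 \<or> f 4 = 5 \<or> f 4 = 6" using v4 n23 by auto
        then show ?thesis
        proof (elim disjE)
          assume h24: "f 4 = 3"
          show ?thesis using c[of 3] h22 h24 h22 by simp
        next
          assume h25: "f 4 = 5"
          have h26: "f 5 = 3" using c[of 3] h22 h25 by simp
          have h27: "f 6 = 6" using v6 inj[of 6 1] h0 inj[of 6 2] h2 inj[of 6 5] h26 inj[of 6 3] h22 inj[of 6 4] h25 by auto
          show ?thesis using h0 h2 h22 h25 h26 h27 by (simp add: O3_def I6_def)
        next
          assume h28: "f 4 = 6"
          have h29: "f 6 = 3" using c[of 3] h22 h28 by simp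
          have h30: "f 5 = 5" using v5 inj[of 5 1] h0 inj[of 5 2] h2 inj[of 5 6] h29 inj[of 5 3] h22 inj[of 5 4] h28 by auto
          show ?thesis using h0 h2 h22 h28 h30 h29 by (simp add: O3_def I6_def)
        qed
      next
        assume h31: "f 3 = 5"
        have n32: "f 5 \<noteq> 1 \<and> f 5 \<noteq> 2 \<and> f 5 \<noteq> 5" using inj[of 5 1] inj[of 5 2] inj[of 5 3] h0 h2 h31 by auto
        have "f 5 = 3 \<or> f 5 = 4 \<or> f 5 = 6" using v5 n32 by auto
        then show ?thesis
        proof (elim disjE)
          assume h33: "f 5 = 3"
          show ?thesis using c[of 3] h31 h33 h31 by simp
        next
          assume h34: "f 5 = 4"
          have h35: "f 4 = 3" using c[of 3] h31 h34 by simp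
          have h36: "f 6 = 6" using v6 inj[of 6 1] h0 inj[of 6 2] h2 inj[of 6 4] h35 inj[of 6 5] h34 inj[of 6 3] h31 by auto
          show ?thesis using h0 h2 h31 h35 h34 h36 by (simp add: O3_def I6_def)
        next
          assume h37: "f 5 = 6"
          have h38: "f 6 = 3" using c[of 3] h31 h37 by simp
          have h39: "f 4 = 4" using v4 inj[of 4 1] h0 inj[of 4 2] h2 inj[of 4 6] h38 inj[of 4 3] h31 inj[of 4 5] h37 by auto
          show ?thesis using h0 h2 h31 h39 h37 h38 by (simp add: O3_def I6_def)
        qed
      next
        assume h40: "f 3 = 6"
        have n41: "f 6 \<noteq> 1 \<and> f 6 \<noteq> 2 \<and> f 6 \<noteq> 6" using inj[of 6 1] inj[of 6 2] inj[of 6 3] h0 h2 h40 by auto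
        have "f 6 = 3 \<or> f 6 = 4 \<or> f 6 = 5" using v6 n41 by auto
        then show ?thesis
        proof (elim disjE)
          assume h42: "f 6 = 3"
          show ?thesis using c[of 3] h40 h42 h40 by simp
        next
          assume h43: "f 6 = 4"
          have h44: "f 4 = 3" using c[of 3] h40 h43 by simp
          have h45: "f 5 = 5" using v5 inj[of 5 1] h0 inj[of 5 2] h2 inj[of 5 4] h44 inj[of 5 6] h43 inj[of 5 3] h40 by auto
          show ?thesis using h0 h2 h40 h44 h45 h43 by (simp add: O3_def I6_def)
        next
          assume h46: "f 6 = 5"
          have h47: "f 5 = 3" using c[of 3] h40 h46 by simp
          have h48: "f 4 = 4" using v4 inj[of 4 1] h0 inj[of 4 2] h2 inj[of 4 5] h47 inj[of 4 6] h46 inj[of 4 3] h40 by auto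
          show ?thesis using h0 h2 h40 h48 h47 h46 by (simp add: O3_def I6_def)
        qed
      qed
    next
      assume h49: "f 2 = 3"
      have n50: "f 3 \<noteq> 1 \<and> f 3 \<noteq> 3" using inj[of 3 1] inj[of 3 2] h0 h49 by auto
      have "f 3 = 2 \<or> f 3 = 4 \<or> f 3 = 5 \<or> f 3 = 6" using v3 n50 by auto
      then show ?thesis
      proof (elim disjE)
        assume h51: "f 3 = 2"
        show ?thesis using c[of 2] h49 h51 h49 by simp
      next
        assume h52: "f 3 = 4"
        have h53: "f 4 = 2" using c[of 2] h49 h52 by simp
        have n54: "f 5 \<noteq> 1 \<and> f 5 \<noteq> 2 \<and> f 5 \<noteq> 3 \<and> f 5 \<noteq> 4" using inj[of 5 1] inj[of 5 4] inj[of 5 2] inj[of 5 3] h0 h53 h49 h52 by auto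
        have "f 5 = 5 \<or> f 5 = 6" using v5 n54 by auto
        then show ?thesis
        proof (elim disjE)
          assume h55: "f 5 = 5"
          have h56: "f 6 = 6" using v6 inj[of 6 1] h0 inj[of 6 4] h53 inj[of 6 2] h49 inj[of 6 3] h52 inj[of 6 5] h55 by auto
          show ?thesis using h0 h49 h52 h53 h55 h56 by (simp add: O3_def I6_def)
        next
          assume h57: "f 5 = 6"
          have h58: "f 6 = 5" using v6 inj[of 6 1] h0 inj[of 6 4] h53 inj[of 6 2] h49 inj[of 6 3] h52 inj[of 6 5] h57 by auto
          show ?thesis using c[of 5] h57 h58 h57 by simp
        qed
      next
        assume h59: "f 3 = 5"
        have h60: "f 5 = 2" using c[of 2] h49 h59 by simp
        have n61: "f 4 \<noteq> 1 \<and> f 4 \<noteq> 2 \<and> f 4 \<noteq> 3 \<and> f 4 \<noteq> 5" using inj[of 4 1] inj[of 4 5] inj[of 4 2] inj[of 4 3] h0 h60 h49 h59 by auto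
        have "f 4 = 4 \<or> f 4 = 6" using v4 n61 by auto
        then show ?thesis
        proof (elim disjE)
          assume h62: "f 4 = 4"
          have h63: "f 6 = 6" using v6 inj[of 6 1] h0 inj[of 6 5] h60 inj[of 6 2] h49 inj[of 6 4] h62 inj[of 6 3] h59 by auto
          show ?thesis using h0 h49 h59 h62 h60 h63 by (simp add: O3_def I6_def)
        next
          assume h64: "f 4 = 6"
          have h65: "f 6 = 4" using v6 inj[of 6 1] h0 inj[of 6 5] h60 inj[of 6 2] h49 inj[of 6 3] h59 inj[of 6 4] h64 by auto
          show ?thesis using c[of 4] h64 h65 h64 by simp
        qed
      next
        assume h66: "f 3 = 6"
        have h67: "f 6 = 2" using c[of 2] h49 h66 by simp
        have n68: "f 4 \<noteq> 1 \<and> f 4 \<noteq> 2 \<and> f 4 \<noteq> 3 \<and> f 4 \<noteq> 6" using inj[of 4 1] inj[of 4 6] inj[of 4 2] inj[of 4 3] h0 h67 h49 h66 by auto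
        have "f 4 = 4 \<or> f 4 = 5" using v4 n68 by auto
        then show ?thesis
        proof (elim disjE)
          assume h69: "f 4 = 4"
          have h70: "f 5 = 5" using v5 inj[of 5 1] h0 inj[of 5 6] h67 inj[of 5 2] h49 inj[of 5 4] h69 inj[of 5 3] h66 by auto
          show ?thesis using h0 h49 h66 h69 h70 h67 by (simp add: O3_def I6_def)
        next
          assume h71: "f 4 = 5"
          have h72: "f 5 = 4" using v5 inj[of 5 1] h0 inj[of 5 6] h67 inj[of 5 2] h49 inj[of 5 4] h71 inj[of 5 3] h66 by auto
          show ?thesis using c[of 4] h71 h72 h71 by simp
        qed
      qed
    next
      assume h73: "f 2 = 4"
      have n74: "f 4 \<noteq> 1 \<and> f 4 \<noteq> 4" using inj[of 4 1] inj[of 4 2] h0 h73 by auto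
      have "f 4 = 2 \<or> f 4 = 3 \<or> f 4 = 5 \<or> f 4 = 6" using v4 n74 by auto
      then show ?thesis
      proof (elim disjE)
        assume h75: "f 4 = 2"
        show ?thesis using c[of 2] h73 h75 h73 by simp
      next
        assume h76: "f 4 = 3"
        have h77: "f 3 = 2" using c[of 2] h73 h76 by simp
        have n78: "f 5 \<noteq> 1 \<and> f 5 \<noteq> 2 \<and> f 5 \<noteq> 3 \<and> f 5 \<noteq> 4" using inj[of 5 1] inj[of 5 3] inj[of 5 4] inj[of 5 2] h0 h77 h76 h73 by auto
        have "f 5 = 5 \<or> f 5 = 6" using v5 n78 by auto
        then show ?thesis
        proof (elim disjE)
          assume h79: "f 5 = 5"
          have h80: "f 6 = 6" using v6 inj[of 6 1] h0 inj[of 6 3] h77 inj[of 6 4] h76 inj[of 6 2] h73 inj[of 6 5] h79 by auto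
          show ?thesis using h0 h73 h77 h76 h79 h80 by (simp add: O3_def I6_def)
        next
          assume h81: "f 5 = 6"
          have h82: "f 6 = 5" using v6 inj[of 6 1] h0 inj[of 6 3] h77 inj[of 6 4] h76 inj[of 6 2] h73 inj[of 6 5] h81 by auto
          show ?thesis using c[of 5] h81 h82 h81 by simp
        qed
      next
        assume h83: "f 4 = 5"
        have h84: "f 5 = 2" using c[of 2] h73 h83 by simp
        have n85: "f 3 \<noteq> 1 \<and> f 3 \<noteq> 2 \<and> f 3 \<noteq> 4 \<and> f 3 \<noteq> 5" using inj[of 3 1] inj[of 3 5] inj[of 3 2] inj[of 3 4] h0 h84 h73 h83 by auto
        have "f 3 = 3 \<or> f 3 = 6" using v3 n85 by auto
        then show ?thesis
        proof (elim disjE)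
          assume h86: "f 3 = 3"
          have h87: "f 6 = 6" using v6 inj[of 6 1] h0 inj[of 6 5] h84 inj[of 6 3] h86 inj[of 6 2] h73 inj[of 6 4] h83 by auto
          show ?thesis using h0 h73 h86 h83 h84 h87 by (simp add: O3_def I6_def)
        next
          assume h88: "f 3 = 6"
          have h89: "f 6 = 3" using v6 inj[of 6 1] h0 inj[of 6 5] h84 inj[of 6 2] h73 inj[of 6 4] h83 inj[of 6 3] h88 by auto
          show ?thesis using c[of 3] h88 h89 h88 by simp
        qed
      next
        assume h90: "f 4 = 6"
        have h91: "f 6 = 2" using c[of 2] h73 h90 by simp
        have n92: "f 3 \<noteq> 1 \<and> f 3 \<noteq> 2 \<and> f 3 \<noteq> 4 \<and> f 3 \<noteq> 6" using inj[of 3 1] inj[of 3 6] inj[of 3 2] inj[of 3 4] h0 h91 h73 h90 by auto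
        have "f 3 = 3 \<or> f 3 = 5" using v3 n92 by auto
        then show ?thesis
        proof (elim disjE)
          assume h93: "f 3 = 3"
          have h94: "f 5 = 5" using v5 inj[of 5 1] h0 inj[of 5 6] h91 inj[of 5 3] h93 inj[of 5 2] h73 inj[of 5 4] h90 by auto
          show ?thesis using h0 h73 h93 h90 h94 h91 by (simp add: O3_def I6_def)
        next
          assume h95: "f 3 = 5"
          have h96: "f 5 = 3" using v5 inj[of 5 1] h0 inj[of 5 6] h91 inj[of 5 2] h73 inj[of 5 3] h95 inj[of 5 4] h90 by auto
          show ?thesis using c[of 3] h95 h96 h95 by simp
        qed
      qed
    next
      assume h97: "f 2 = 5"
      have n98: "f 5 \<noteq> 1 \<and> f 5 \<noteq> 5" using inj[of 5 1] inj[of 5 2] h0 h97 by auto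
      have "f 5 = 2 \<or> f 5 = 3 \<or> f 5 = 4 \<or> f 5 = 6" using v5 n98 by auto
      then show ?thesis
      proof (elim disjE)
        assume h99: "f 5 = 2"
        show ?thesis using c[of 2] h97 h99 h97 by simp
      next
        assume h100: "f 5 = 3"
        have h101: "f 3 = 2" using c[of 2] h97 h100 by simp
        have n102: "f 4 \<noteq> 1 \<and> f 4 \<noteq> 2 \<and> f 4 \<noteq> 3 \<and> f 4 \<noteq> 5" using inj[of 4 1] inj[of 4 3] inj[of 4 5] inj[of 4 2] h0 h101 h100 h97 by auto
        have "f 4 = 4 \<or> f 4 = 6" using v4 n102 by auto
        then show ?thesis
        proof (elim disjE)
          assume h103: "f 4 = 4"
          have h104: "f 6 = 6" using v6 inj[of 6 1] h0 inj[of 6 3] h101 inj[of 6 5] h100 inj[of 6 4] h103 inj[of 6 2] h97 by auto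
          show ?thesis using h0 h97 h101 h103 h100 h104 by (simp add: O3_def I6_def)
        next
          assume h105: "f 4 = 6"
          have h106: "f 6 = 4" using v6 inj[of 6 1] h0 inj[of 6 3] h101 inj[of 6 5] h100 inj[of 6 2] h97 inj[of 6 4] h105 by auto
          show ?thesis using c[of 4] h105 h106 h105 by simp
        qed
      next
        assume h107: "f 5 = 4"
        have h108: "f 4 = 2" using c[of 2] h97 h107 by simp
        have n109: "f 3 \<noteq> 1 \<and> f 3 \<noteq> 2 \<and> f 3 \<noteq> 4 \<and> f 3 \<noteq> 5" using inj[of 3 1] inj[of 3 4] inj[of 3 5] inj[of 3 2] h0 h108 h107 h97 by auto
        have "f 3 = 3 \<or> f 3 = 6" using v3 n109 by auto
        then show ?thesis
        proof (elim disjE)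
          assume h110: "f 3 = 3"
          have h111: "f 6 = 6" using v6 inj[of 6 1] h0 inj[of 6 4] h108 inj[of 6 3] h110 inj[of 6 5] h107 inj[of 6 2] h97 by auto
          show ?thesis using h0 h97 h110 h108 h107 h111 by (simp add: O3_def I6_def)
        next
          assume h112: "f 3 = 6"
          have h113: "f 6 = 3" using v6 inj[of 6 1] h0 inj[of 6 4] h108 inj[of 6 5] h107 inj[of 6 2] h97 inj[of 6 3] h112 by auto
          show ?thesis using c[of 3] h112 h113 h112 by simp
        qed
      next
        assume h114: "f 5 = 6"
        have h115: "f 6 = 2" using c[of 2] h97 h114 by simp
        have n116: "f 3 \<noteq> 1 \<and> f 3 \<noteq> 2 \<and> f 3 \<noteq> 5 \<and> f 3 \<noteq> 6" using inj[of 3 1] inj[of 3 6] inj[of 3 2] inj[of 3 5] h0 h115 h97 h114 by auto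
        have "f 3 = 3 \<or> f 3 = 4" using v3 n116 by auto
        then show ?thesis
        proof (elim disjE)
          assume h117: "f 3 = 3"
          have h118: "f 4 = 4" using v4 inj[of 4 1] h0 inj[of 4 6] h115 inj[of 4 3] h117 inj[of 4 2] h97 inj[of 4 5] h114 by auto
          show ?thesis using h0 h97 h117 h118 h114 h115 by (simp add: O3_def I6_def)
        next
          assume h119: "f 3 = 4"
          have h120: "f 4 = 3" using v4 inj[of 4 1] h0 inj[of 4 6] h115 inj[of 4 3] h119 inj[of 4 2] h97 inj[of 4 5] h114 by auto
          show ?thesis using c[of 3] h119 h120 h119 by simp
        qed
      qed
    next
      assume h121: "f 2 = 6"
      have n122: "f 6 \<noteq> 1 \<and> f 6 \<noteq> 6" using inj[of 6 1] inj[of 6 2] h0 h121 by auto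
      have "f 6 = 2 \<or> f 6 = 3 \<or> f 6 = 4 \<or> f 6 = 5" using v6 n122 by auto
      then show ?thesis
      proof (elim disjE)
        assume h123: "f 6 = 2"
        show ?thesis using c[of 2] h121 h123 h121 by simp
      next
        assume h124: "f 6 = 3"
        have h125: "f 3 = 2" using c[of 2] h121 h124 by simp
        have n126: "f 4 \<noteq> 1 \<and> f 4 \<noteq> 2 \<and> f 4 \<noteq> 3 \<and> f 4 \<noteq> 6" using inj[of 4 1] inj[of 4 3] inj[of 4 6] inj[of 4 2] h0 h125 h124 h121 by auto
        have "f 4 = 4 \<or> f 4 = 5" using v4 n126 by auto
        then show ?thesis
        proof (elim disjE)
          assume h127: "f 4 = 4"
          have h128: "f 5 = 5" using v5 inj[of 5 1] h0 inj[of 5 3] h125 inj[of 5 6] h124 inj[of 5 4] h127 inj[of 5 2] h121 by auto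
          show ?thesis using h0 h121 h125 h127 h128 h124 by (simp add: O3_def I6_def)
        next
          assume h129: "f 4 = 5"
          have h130: "f 5 = 4" using v5 inj[of 5 1] h0 inj[of 5 3] h125 inj[of 5 6] h124 inj[of 5 4] h129 inj[of 5 2] h121 by auto
          show ?thesis using c[of 4] h129 h130 h129 by simp
        qed
      next
        assume h131: "f 6 = 4"
        have h132: "f 4 = 2" using c[of 2] h121 h131 by simp
        have n133: "f 3 \<noteq> 1 \<and> f 3 \<noteq> 2 \<and> f 3 \<noteq> 4 \<and> f 3 \<noteq> 6" using inj[of 3 1] inj[of 3 4] inj[of 3 6] inj[of 3 2] h0 h132 h131 h121 by auto
        have "f 3 = 3 \<or> f 3 = 5" using v3 n133 by auto
        then show ?thesis
        proof (elim disjE)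
          assume h134: "f 3 = 3"
          have h135: "f 5 = 5" using v5 inj[of 5 1] h0 inj[of 5 4] h132 inj[of 5 3] h134 inj[of 5 6] h131 inj[of 5 2] h121 by auto
          show ?thesis using h0 h121 h134 h132 h135 h131 by (simp add: O3_def I6_def)
        next
          assume h136: "f 3 = 5"
          have h137: "f 5 = 3" using v5 inj[of 5 1] h0 inj[of 5 4] h132 inj[of 5 6] h131 inj[of 5 3] h136 inj[of 5 2] h121 by auto
          show ?thesis using c[of 3] h136 h137 h136 by simp
        qed
      next
        assume h138: "f 6 = 5"
        have h139: "f 5 = 2" using c[of 2] h121 h138 by simp
        have n140: "f 3 \<noteq> 1 \<and> f 3 \<noteq> 2 \<and> f 3 \<noteq> 5 \<and> f 3 \<noteq> 6" using inj[of 3 1] inj[of 3 5] inj[of 3 6] inj[of 3 2] h0 h139 h138 h121 by auto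
        have "f 3 = 3 \<or> f 3 = 4" using v3 n140 by auto
        then show ?thesis
        proof (elim disjE)
          assume h141: "f 3 = 3"
          have h142: "f 4 = 4" using v4 inj[of 4 1] h0 inj[of 4 5] h139 inj[of 4 3] h141 inj[of 4 6] h138 inj[of 4 2] h121 by auto
          show ?thesis using h0 h121 h141 h142 h139 h138 by (simp add: O3_def I6_def)
        next
          assume h143: "f 3 = 4"
          have h144: "f 4 = 3" using v4 inj[of 4 1] h0 inj[of 4 5] h139 inj[of 4 3] h143 inj[of 4 6] h138 inj[of 4 2] h121 by auto
          show ?thesis using c[of 3] h143 h144 h143 by simp
        qed
      qed
    qed
  next
    assume h145: "f 1 = 2"
    have n146: "f 2 \<noteq> 2" using inj[of 2 1] h145 by auto
    have "f 2 = 1 \<or> f 2 = 3 \<or> f 2 = 4 \<or> f 2 = 5 \<or> f 2 = 6" using v2 n146 by auto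
    then show ?thesis
    proof (elim disjE)
      assume h147: "f 2 = 1"
      show ?thesis using c[of 1] h145 h147 h145 by simp
    next
      assume h148: "f 2 = 3"
      have h149: "f 3 = 1" using c[of 1] h145 h148 by simp
      have n150: "f 4 \<noteq> 1 \<and> f 4 \<noteq> 2 \<and> f 4 \<noteq> 3" using inj[of 4 3] inj[of 4 1] inj[of 4 2] h149 h145 h148 by auto
      have "f 4 = 4 \<or> f 4 = 5 \<or> f 4 = 6" using v4 n150 by auto
      then show ?thesis
      proof (elim disjE)
        assume h151: "f 4 = 4"
        have n152: "f 5 \<noteq> 1 \<and> f 5 \<noteq> 2 \<and> f 5 \<noteq> 3 \<and> f 5 \<noteq> 4" using inj[of 5 3] inj[of 5 1] inj[of 5 2] inj[of 5 4] h149 h145 h148 h151 by auto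
        have "f 5 = 5 \<or> f 5 = 6" using v5 n152 by auto
        then show ?thesis
        proof (elim disjE)
          assume h153: "f 5 = 5"
          have h154: "f 6 = 6" using v6 inj[of 6 3] h149 inj[of 6 1] h145 inj[of 6 2] h148 inj[of 6 4] h151 inj[of 6 5] h153 by auto
          show ?thesis using h145 h148 h149 h151 h153 h154 by (simp add: O3_def I6_def)
        next
          assume h155: "f 5 = 6"
          have h156: "f 6 = 5" using v6 inj[of 6 3] h149 inj[of 6 1] h145 inj[of 6 2] h148 inj[of 6 4] h151 inj[of 6 5] h155 by auto
          show ?thesis using c[of 5] h155 h156 h155 by simp
        qed
      next
        assume h157: "f 4 = 5"
        have n158: "f 5 \<noteq> 1 \<and> f 5 \<noteq> 2 \<and> f 5 \<noteq> 3 \<and> f 5 \<noteq> 5" using inj[of 5 3] inj[of 5 1] inj[of 5 2] inj[of 5 4] h149 h145 h148 h157 by auto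
        have "f 5 = 4 \<or> f 5 = 6" using v5 n158 by auto
        then show ?thesis
        proof (elim disjE)
          assume h159: "f 5 = 4"
          show ?thesis using c[of 4] h157 h159 h157 by simp
        next
          assume h160: "f 5 = 6"
          have h161: "f 6 = 4" using c[of 4] h157 h160 by simp
          show ?thesis using h145 h148 h149 h157 h160 h161 by (simp add: O3_def I6_def)
        qed
      next
        assume h162: "f 4 = 6"
        have n163: "f 6 \<noteq> 1 \<and> f 6 \<noteq> 2 \<and> f 6 \<noteq> 3 \<and> f 6 \<noteq> 6" using inj[of 6 3] inj[of 6 1] inj[of 6 2] inj[of 6 4] h149 h145 h148 h162 by auto
        have "f 6 = 4 \<or> f 6 = 5" using v6 n163 by auto
        then show ?thesis
        proof (elim disjE)
          assume h164: "f 6 = 4"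
          show ?thesis using c[of 4] h162 h164 h162 by simp
        next
          assume h165: "f 6 = 5"
          have h166: "f 5 = 4" using c[of 4] h162 h165 by simp
          show ?thesis using h145 h148 h149 h162 h166 h165 by (simp add: O3_def I6_def)
        qed
      qed
    next
      assume h167: "f 2 = 4"
      have h168: "f 4 = 1" using c[of 1] h145 h167 by simp
      have n169: "f 3 \<noteq> 1 \<and> f 3 \<noteq> 2 \<and> f 3 \<noteq> 4" using inj[of 3 4] inj[of 3 1] inj[of 3 2] h168 h145 h167 by auto
      have "f 3 = 3 \<or> f 3 = 5 \<or> f 3 = 6" using v3 n169 by auto
      then show ?thesis
      proof (elim disjE)
        assume h170: "f 3 = 3"
        have n171: "f 5 \<noteq> 1 \<and> f 5 \<noteq> 2 \<and> f 5 \<noteq> 3 \<and> f 5 \<noteq> 4" using inj[of 5 4] inj[of 5 1] inj[of 5 3] inj[of 5 2] h168 h145 h170 h167 by auto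
        have "f 5 = 5 \<or> f 5 = 6" using v5 n171 by auto
        then show ?thesis
        proof (elim disjE)
          assume h172: "f 5 = 5"
          have h173: "f 6 = 6" using v6 inj[of 6 4] h168 inj[of 6 1] h145 inj[of 6 3] h170 inj[of 6 2] h167 inj[of 6 5] h172 by auto
          show ?thesis using h145 h167 h170 h168 h172 h173 by (simp add: O3_def I6_def)
        next
          assume h174: "f 5 = 6"
          have h175: "f 6 = 5" using v6 inj[of 6 4] h168 inj[of 6 1] h145 inj[of 6 3] h170 inj[of 6 2] h167 inj[of 6 5] h174 by auto
          show ?thesis using c[of 5] h174 h175 h174 by simp
        qed
      next
        assume h176: "f 3 = 5"
        have n177: "f 5 \<noteq> 1 \<and> f 5 \<noteq> 2 \<and> f 5 \<noteq> 4 \<and> f 5 \<noteq> 5" using inj[of 5 4] inj[of 5 1] inj[of 5 2] inj[of 5 3] h168 h145 h167 h176 by auto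
        have "f 5 = 3 \<or> f 5 = 6" using v5 n177 by auto
        then show ?thesis
        proof (elim disjE)
          assume h178: "f 5 = 3"
          show ?thesis using c[of 3] h176 h178 h176 by simp
        next
          assume h179: "f 5 = 6"
          have h180: "f 6 = 3" using c[of 3] h176 h179 by simp
          show ?thesis using h145 h167 h176 h168 h179 h180 by (simp add: O3_def I6_def)
        qed
      next
        assume h181: "f 3 = 6"
        have n182: "f 6 \<noteq> 1 \<and> f 6 \<noteq> 2 \<and> f 6 \<noteq> 4 \<and> f 6 \<noteq> 6" using inj[of 6 4] inj[of 6 1] inj[of 6 2] inj[of 6 3] h168 h145 h167 h181 by auto
        have "f 6 = 3 \<or> f 6 = 5" using v6 n182 by auto
        then show ?thesis
        proof (elim disjE)
          assume h183: "f 6 = 3"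
          show ?thesis using c[of 3] h181 h183 h181 by simp
        next
          assume h184: "f 6 = 5"
          have h185: "f 5 = 3" using c[of 3] h181 h184 by simp
          show ?thesis using h145 h167 h181 h168 h185 h184 by (simp add: O3_def I6_def)
        qed
      qed
    next
      assume h186: "f 2 = 5"
      have h187: "f 5 = 1" using c[of 1] h145 h186 by simp
      have n188: "f 3 \<noteq> 1 \<and> f 3 \<noteq> 2 \<and> f 3 \<noteq> 5" using inj[of 3 5] inj[of 3 1] inj[of 3 2] h187 h145 h186 by auto
      have "f 3 = 3 \<or> f 3 = 4 \<or> f 3 = 6" using v3 n188 by auto
      then show ?thesis
      proof (elim disjE)
        assume h189: "f 3 = 3"
        have n190: "f 4 \<noteq> 1 \<and> f 4 \<noteq> 2 \<and> f 4 \<noteq> 3 \<and> f 4 \<noteq> 5" using inj[of 4 5] inj[of 4 1] inj[of 4 3] inj[of 4 2] h187 h145 h189 h186 by auto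
        have "f 4 = 4 \<or> f 4 = 6" using v4 n190 by auto
        then show ?thesis
        proof (elim disjE)
          assume h191: "f 4 = 4"
          have h192: "f 6 = 6" using v6 inj[of 6 5] h187 inj[of 6 1] h145 inj[of 6 3] h189 inj[of 6 4] h191 inj[of 6 2] h186 by auto
          show ?thesis using h145 h186 h189 h191 h187 h192 by (simp add: O3_def I6_def)
        next
          assume h193: "f 4 = 6"
          have h194: "f 6 = 4" using v6 inj[of 6 5] h187 inj[of 6 1] h145 inj[of 6 3] h189 inj[of 6 2] h186 inj[of 6 4] h193 by auto
          show ?thesis using c[of 4] h193 h194 h193 by simp
        qed
      next
        assume h195: "f 3 = 4"
        have n196: "f 4 \<noteq> 1 \<and> f 4 \<noteq> 2 \<and> f 4 \<noteq> 4 \<and> f 4 \<noteq> 5" using inj[of 4 5] inj[of 4 1] inj[of 4 3] inj[of 4 2] h187 h145 h195 h186 by auto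
        have "f 4 = 3 \<or> f 4 = 6" using v4 n196 by auto
        then show ?thesis
        proof (elim disjE)
          assume h197: "f 4 = 3"
          show ?thesis using c[of 3] h195 h197 h195 by simp
        next
          assume h198: "f 4 = 6"
          have h199: "f 6 = 3" using c[of 3] h195 h198 by simp
          show ?thesis using h145 h186 h195 h198 h187 h199 by (simp add: O3_def I6_def)
        qed
      next
        assume h200: "f 3 = 6"
        have n201: "f 6 \<noteq> 1 \<and> f 6 \<noteq> 2 \<and> f 6 \<noteq> 5 \<and> f 6 \<noteq> 6" using inj[of 6 5] inj[of 6 1] inj[of 6 2] inj[of 6 3] h187 h145 h186 h200 by auto
        have "f 6 = 3 \<or> f 6 = 4" using v6 n201 by auto
        then show ?thesis
        proof (elim disjE)
          assume h202: "f 6 = 3"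
          show ?thesis using c[of 3] h200 h202 h200 by simp
        next
          assume h203: "f 6 = 4"
          have h204: "f 4 = 3" using c[of 3] h200 h203 by simp
          show ?thesis using h145 h186 h200 h204 h187 h203 by (simp add: O3_def I6_def)
        qed
      qed
    next
      assume h205: "f 2 = 6"
      have h206: "f 6 = 1" using c[of 1] h145 h205 by simp
      have n207: "f 3 \<noteq> 1 \<and> f 3 \<noteq> 2 \<and> f 3 \<noteq> 6" using inj[of 3 6] inj[of 3 1] inj[of 3 2] h206 h145 h205 by auto
      have "f 3 = 3 \<or> f 3 = 4 \<or> f 3 = 5" using v3 n207 by auto
      then show ?thesis
      proof (elim disjE)
        assume h208: "f 3 = 3"
        have n209: "f 4 \<noteq> 1 \<and> f 4 \<noteq> 2 \<and> f 4 \<noteq> 3 \<and> f 4 \<noteq> 6" using inj[of 4 6] inj[of 4 1] inj[of 4 3] inj[of 4 2] h206 h145 h208 h205 by auto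
        have "f 4 = 4 \<or> f 4 = 5" using v4 n209 by auto
        then show ?thesis
        proof (elim disjE)
          assume h210: "f 4 = 4"
          have h211: "f 5 = 5" using v5 inj[of 5 6] h206 inj[of 5 1] h145 inj[of 5 3] h208 inj[of 5 4] h210 inj[of 5 2] h205 by auto
          show ?thesis using h145 h205 h208 h210 h211 h206 by (simp add: O3_def I6_def)
        next
          assume h212: "f 4 = 5"
          have h213: "f 5 = 4" using v5 inj[of 5 6] h206 inj[of 5 1] h145 inj[of 5 3] h208 inj[of 5 4] h212 inj[of 5 2] h205 by auto
          show ?thesis using c[of 4] h212 h213 h212 by simp
        qed
      next
        assume h214: "f 3 = 4"
        have n215: "f 4 \<noteq> 1 \<and> f 4 \<noteq> 2 \<and> f 4 \<noteq> 4 \<and> f 4 \<noteq> 6" using inj[of 4 6] inj[of 4 1] inj[of 4 3] inj[of 4 2] h206 h145 h214 h205 by auto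
        have "f 4 = 3 \<or> f 4 = 5" using v4 n215 by auto
        then show ?thesis
        proof (elim disjE)
          assume h216: "f 4 = 3"
          show ?thesis using c[of 3] h214 h216 h214 by simp
        next
          assume h217: "f 4 = 5"
          have h218: "f 5 = 3" using c[of 3] h214 h217 by simp
          show ?thesis using h145 h205 h214 h217 h218 h206 by (simp add: O3_def I6_def)
        qed
      next
        assume h219: "f 3 = 5"
        have n220: "f 5 \<noteq> 1 \<and> f 5 \<noteq> 2 \<and> f 5 \<noteq> 5 \<and> f 5 \<noteq> 6" using inj[of 5 6] inj[of 5 1] inj[of 5 3] inj[of 5 2] h206 h145 h219 h205 by auto
        have "f 5 = 3 \<or> f 5 = 4" using v5 n220 by auto
        then show ?thesis
        proof (elim disjE)
          assume h221: "f 5 = 3"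
          show ?thesis using c[of 3] h219 h221 h219 by simp
        next
          assume h222: "f 5 = 4"
          have h223: "f 4 = 3" using c[of 3] h219 h222 by simp
          show ?thesis using h145 h205 h219 h223 h222 h206 by (simp add: O3_def I6_def)
        qed
      qed
    qed
  next
    assume h224: "f 1 = 3"
    have n225: "f 3 \<noteq> 3" using inj[of 3 1] h224 by auto
    have "f 3 = 1 \<or> f 3 = 2 \<or> f 3 = 4 \<or> f 3 = 5 \<or> f 3 = 6" using v3 n225 by auto
    then show ?thesis
    proof (elim disjE)
      assume h226: "f 3 = 1"
      show ?thesis using c[of 1] h224 h226 h224 by simp
    next
      assume h227: "f 3 = 2"
      have h228: "f 2 = 1" using c[of 1] h224 h227 by simp
      have n229: "f 4 \<noteq> 1 \<and> f 4 \<noteq> 2 \<and> f 4 \<noteq> 3" using inj[of 4 2] inj[of 4 3] inj[of 4 1] h228 h227 h224 by auto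
      have "f 4 = 4 \<or> f 4 = 5 \<or> f 4 = 6" using v4 n229 by auto
      then show ?thesis
      proof (elim disjE)
        assume h230: "f 4 = 4"
        have n231: "f 5 \<noteq> 1 \<and> f 5 \<noteq> 2 \<and> f 5 \<noteq> 3 \<and> f 5 \<noteq> 4" using inj[of 5 2] inj[of 5 3] inj[of 5 1] inj[of 5 4] h228 h227 h224 h230 by auto
        have "f 5 = 5 \<or> f 5 = 6" using v5 n231 by auto
        then show ?thesis
        proof (elim disjE)
          assume h232: "f 5 = 5"
          have h233: "f 6 = 6" using v6 inj[of 6 2] h228 inj[of 6 3] h227 inj[of 6 1] h224 inj[of 6 4] h230 inj[of 6 5] h232 by auto
          show ?thesis using h224 h228 h227 h230 h232 h233 by (simp add: O3_def I6_def)
        next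
          assume h234: "f 5 = 6"
          have h235: "f 6 = 5" using v6 inj[of 6 2] h228 inj[of 6 3] h227 inj[of 6 1] h224 inj[of 6 4] h230 inj[of 6 5] h234 by auto
          show ?thesis using c[of 5] h234 h235 h234 by simp
        qed
      next
        assume h236: "f 4 = 5"
        have n237: "f 5 \<noteq> 1 \<and> f 5 \<noteq> 2 \<and> f 5 \<noteq> 3 \<and> f 5 \<noteq> 5" using inj[of 5 2] inj[of 5 3] inj[of 5 1] inj[of 5 4] h228 h227 h224 h236 by auto
        have "f 5 = 4 \<or> f 5 = 6" using v5 n237 by auto
        then show ?thesis
        proof (elim disjE)
          assume h238: "f 5 = 4"
          show ?thesis using c[of 4] h236 h238 h236 by simp
        next
          assume h239: "f 5 = 6"
          have h240: "f 6 = 4" using c[of 4] h236 h239 by simp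
          show ?thesis using h224 h228 h227 h236 h239 h240 by (simp add: O3_def I6_def)
        qed
      next
        assume h241: "f 4 = 6"
        have n242: "f 6 \<noteq> 1 \<and> f 6 \<noteq> 2 \<and> f 6 \<noteq> 3 \<and> f 6 \<noteq> 6" using inj[of 6 2] inj[of 6 3] inj[of 6 1] inj[of 6 4] h228 h227 h224 h241 by auto
        have "f 6 = 4 \<or> f 6 = 5" using v6 n242 by auto
        then show ?thesis
        proof (elim disjE)
          assume h243: "f 6 = 4"
          show ?thesis using c[of 4] h241 h243 h241 by simp
        next
          assume h244: "f 6 = 5"
          have h245: "f 5 = 4" using c[of 4] h241 h244 by simp
          show ?thesis using h224 h228 h227 h241 h245 h244 by (simp add: O3_def I6_def)
        qed
      qed
    next
      assume h246: "f 3 = 4"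
      have h247: "f 4 = 1" using c[of 1] h224 h246 by simp
      have n248: "f 2 \<noteq> 1 \<and> f 2 \<noteq> 3 \<and> f 2 \<noteq> 4" using inj[of 2 4] inj[of 2 1] inj[of 2 3] h247 h224 h246 by auto
      have "f 2 = 2 \<or> f 2 = 5 \<or> f 2 = 6" using v2 n248 by auto
      then show ?thesis
      proof (elim disjE)
        assume h249: "f 2 = 2"
        have n250: "f 5 \<noteq> 1 \<and> f 5 \<noteq> 2 \<and> f 5 \<noteq> 3 \<and> f 5 \<noteq> 4" using inj[of 5 4] inj[of 5 2] inj[of 5 1] inj[of 5 3] h247 h249 h224 h246 by auto
        have "f 5 = 5 \<or> f 5 = 6" using v5 n250 by auto
        then show ?thesis
        proof (elim disjE)
          assume h251: "f 5 = 5"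
          have h252: "f 6 = 6" using v6 inj[of 6 4] h247 inj[of 6 2] h249 inj[of 6 1] h224 inj[of 6 3] h246 inj[of 6 5] h251 by auto
          show ?thesis using h224 h249 h246 h247 h251 h252 by (simp add: O3_def I6_def)
        next
          assume h253: "f 5 = 6"
          have h254: "f 6 = 5" using v6 inj[of 6 4] h247 inj[of 6 2] h249 inj[of 6 1] h224 inj[of 6 3] h246 inj[of 6 5] h253 by auto
          show ?thesis using c[of 5] h253 h254 h253 by simp
        qed
      next
        assume h255: "f 2 = 5"
        have n256: "f 5 \<noteq> 1 \<and> f 5 \<noteq> 3 \<and> f 5 \<noteq> 4 \<and> f 5 \<noteq> 5" using inj[of 5 4] inj[of 5 1] inj[of 5 3] inj[of 5 2] h247 h224 h246 h255 by auto
        have "f 5 = 2 \<or> f 5 = 6" using v5 n256 by auto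
        then show ?thesis
        proof (elim disjE)
          assume h257: "f 5 = 2"
          show ?thesis using c[of 2] h255 h257 h255 by simp
        next
          assume h258: "f 5 = 6"
          have h259: "f 6 = 2" using c[of 2] h255 h258 by simp
          show ?thesis using h224 h255 h246 h247 h258 h259 by (simp add: O3_def I6_def)
        qed
      next
        assume h260: "f 2 = 6"
        have n261: "f 6 \<noteq> 1 \<and> f 6 \<noteq> 3 \<and> f 6 \<noteq> 4 \<and> f 6 \<noteq> 6" using inj[of 6 4] inj[of 6 1] inj[of 6 3] inj[of 6 2] h247 h224 h246 h260 by auto
        have "f 6 = 2 \<or> f 6 = 5" using v6 n261 by auto
        then show ?thesis
        proof (elim disjE)
          assume h262: "f 6 = 2"
          show ?thesis using c[of 2] h260 h262 h260 by simp
        next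
          assume h263: "f 6 = 5"
          have h264: "f 5 = 2" using c[of 2] h260 h263 by simp
          show ?thesis using h224 h260 h246 h247 h264 h263 by (simp add: O3_def I6_def)
        qed
      qed
    next
      assume h265: "f 3 = 5"
      have h266: "f 5 = 1" using c[of 1] h224 h265 by simp
      have n267: "f 2 \<noteq> 1 \<and> f 2 \<noteq> 3 \<and> f 2 \<noteq> 5" using inj[of 2 5] inj[of 2 1] inj[of 2 3] h266 h224 h265 by auto
      have "f 2 = 2 \<or> f 2 = 4 \<or> f 2 = 6" using v2 n267 by auto
      then show ?thesis
      proof (elim disjE)
        assume h268: "f 2 = 2"
        have n269: "f 4 \<noteq> 1 \<and> f 4 \<noteq> 2 \<and> f 4 \<noteq> 3 \<and> f 4 \<noteq> 5" using inj[of 4 5] inj[of 4 2] inj[of 4 1] inj[of 4 3] h266 h268 h224 h265 by auto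
        have "f 4 = 4 \<or> f 4 = 6" using v4 n269 by auto
        then show ?thesis
        proof (elim disjE)
          assume h270: "f 4 = 4"
          have h271: "f 6 = 6" using v6 inj[of 6 5] h266 inj[of 6 2] h268 inj[of 6 1] h224 inj[of 6 4] h270 inj[of 6 3] h265 by auto
          show ?thesis using h224 h268 h265 h270 h266 h271 by (simp add: O3_def I6_def)
        next
          assume h272: "f 4 = 6"
          have h273: "f 6 = 4" using v6 inj[of 6 5] h266 inj[of 6 2] h268 inj[of 6 1] h224 inj[of 6 3] h265 inj[of 6 4] h272 by auto
          show ?thesis using c[of 4] h272 h273 h272 by simp
        qed
      next
        assume h274: "f 2 = 4"
        have n275: "f 4 \<noteq> 1 \<and> f 4 \<noteq> 3 \<and> f 4 \<noteq> 4 \<and> f 4 \<noteq> 5" using inj[of 4 5] inj[of 4 1] inj[of 4 2] inj[of 4 3] h266 h224 h274 h265 by auto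
        have "f 4 = 2 \<or> f 4 = 6" using v4 n275 by auto
        then show ?thesis
        proof (elim disjE)
          assume h276: "f 4 = 2"
          show ?thesis using c[of 2] h274 h276 h274 by simp
        next
          assume h277: "f 4 = 6"
          have h278: "f 6 = 2" using c[of 2] h274 h277 by simp
          show ?thesis using h224 h274 h265 h277 h266 h278 by (simp add: O3_def I6_def)
        qed
      next
        assume h279: "f 2 = 6"
        have n280: "f 6 \<noteq> 1 \<and> f 6 \<noteq> 3 \<and> f 6 \<noteq> 5 \<and> f 6 \<noteq> 6" using inj[of 6 5] inj[of 6 1] inj[of 6 3] inj[of 6 2] h266 h224 h265 h279 by auto
        have "f 6 = 2 \<or> f 6 = 4" using v6 n280 by auto
        then show ?thesis
        proof (elim disjE)
          assume h281: "f 6 = 2"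
          show ?thesis using c[of 2] h279 h281 h279 by simp
        next
          assume h282: "f 6 = 4"
          have h283: "f 4 = 2" using c[of 2] h279 h282 by simp
          show ?thesis using h224 h279 h265 h283 h266 h282 by (simp add: O3_def I6_def)
        qed
      qed
    next
      assume h284: "f 3 = 6"
      have h285: "f 6 = 1" using c[of 1] h224 h284 by simp
      have n286: "f 2 \<noteq> 1 \<and> f 2 \<noteq> 3 \<and> f 2 \<noteq> 6" using inj[of 2 6] inj[of 2 1] inj[of 2 3] h285 h224 h284 by auto
      have "f 2 = 2 \<or> f 2 = 4 \<or> f 2 = 5" using v2 n286 by auto
      then show ?thesis
      proof (elim disjE)
        assume h287: "f 2 = 2"
        have n288: "f 4 \<noteq> 1 \<and> f 4 \<noteq> 2 \<and> f 4 \<noteq> 3 \<and> f 4 \<noteq> 6" using inj[of 4 6] inj[of 4 2] inj[of 4 1] inj[of 4 3] h285 h287 h224 h284 by auto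
        have "f 4 = 4 \<or> f 4 = 5" using v4 n288 by auto
        then show ?thesis
        proof (elim disjE)
          assume h289: "f 4 = 4"
          have h290: "f 5 = 5" using v5 inj[of 5 6] h285 inj[of 5 2] h287 inj[of 5 1] h224 inj[of 5 4] h289 inj[of 5 3] h284 by auto
          show ?thesis using h224 h287 h284 h289 h290 h285 by (simp add: O3_def I6_def)
        next
          assume h291: "f 4 = 5"
          have h292: "f 5 = 4" using v5 inj[of 5 6] h285 inj[of 5 2] h287 inj[of 5 1] h224 inj[of 5 4] h291 inj[of 5 3] h284 by auto
          show ?thesis using c[of 4] h291 h292 h291 by simp
        qed
      next
        assume h293: "f 2 = 4"
        have n294: "f 4 \<noteq> 1 \<and> f 4 \<noteq> 3 \<and> f 4 \<noteq> 4 \<and> f 4 \<noteq> 6" using inj[of 4 6] inj[of 4 1] inj[of 4 2] inj[of 4 3] h285 h224 h293 h284 by auto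
        have "f 4 = 2 \<or> f 4 = 5" using v4 n294 by auto
        then show ?thesis
        proof (elim disjE)
          assume h295: "f 4 = 2"
          show ?thesis using c[of 2] h293 h295 h293 by simp
        next
          assume h296: "f 4 = 5"
          have h297: "f 5 = 2" using c[of 2] h293 h296 by simp
          show ?thesis using h224 h293 h284 h296 h297 h285 by (simp add: O3_def I6_def)
        qed
      next
        assume h298: "f 2 = 5"
        have n299: "f 5 \<noteq> 1 \<and> f 5 \<noteq> 3 \<and> f 5 \<noteq> 5 \<and> f 5 \<noteq> 6" using inj[of 5 6] inj[of 5 1] inj[of 5 2] inj[of 5 3] h285 h224 h298 h284 by auto
        have "f 5 = 2 \<or> f 5 = 4" using v5 n299 by auto
        then show ?thesis
        proof (elim disjE)
          assume h300: "f 5 = 2"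
          show ?thesis using c[of 2] h298 h300 h298 by simp
        next
          assume h301: "f 5 = 4"
          have h302: "f 4 = 2" using c[of 2] h298 h301 by simp
          show ?thesis using h224 h298 h284 h302 h301 h285 by (simp add: O3_def I6_def)
        qed
      qed
    qed
  next
    assume h303: "f 1 = 4"
    have n304: "f 4 \<noteq> 4" using inj[of 4 1] h303 by auto
    have "f 4 = 1 \<or> f 4 = 2 \<or> f 4 = 3 \<or> f 4 = 5 \<or> f 4 = 6" using v4 n304 by auto
    then show ?thesis
    proof (elim disjE)
      assume h305: "f 4 = 1"
      show ?thesis using c[of 1] h303 h305 h303 by simp
    next
      assume h306: "f 4 = 2"
      have h307: "f 2 = 1" using c[of 1] h303 h306 by simp
      have n308: "f 3 \<noteq> 1 \<and> f 3 \<noteq> 2 \<and> f 3 \<noteq> 4" using inj[of 3 2] inj[of 3 4] inj[of 3 1] h307 h306 h303 by auto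
      have "f 3 = 3 \<or> f 3 = 5 \<or> f 3 = 6" using v3 n308 by auto
      then show ?thesis
      proof (elim disjE)
        assume h309: "f 3 = 3"
        have n310: "f 5 \<noteq> 1 \<and> f 5 \<noteq> 2 \<and> f 5 \<noteq> 3 \<and> f 5 \<noteq> 4" using inj[of 5 2] inj[of 5 4] inj[of 5 3] inj[of 5 1] h307 h306 h309 h303 by auto
        have "f 5 = 5 \<or> f 5 = 6" using v5 n310 by auto
        then show ?thesis
        proof (elim disjE)
          assume h311: "f 5 = 5"
          have h312: "f 6 = 6" using v6 inj[of 6 2] h307 inj[of 6 4] h306 inj[of 6 3] h309 inj[of 6 1] h303 inj[of 6 5] h311 by auto
          show ?thesis using h303 h307 h309 h306 h311 h312 by (simp add: O3_def I6_def)
        next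
          assume h313: "f 5 = 6"
          have h314: "f 6 = 5" using v6 inj[of 6 2] h307 inj[of 6 4] h306 inj[of 6 3] h309 inj[of 6 1] h303 inj[of 6 5] h313 by auto
          show ?thesis using c[of 5] h313 h314 h313 by simp
        qed
      next
        assume h315: "f 3 = 5"
        have n316: "f 5 \<noteq> 1 \<and> f 5 \<noteq> 2 \<and> f 5 \<noteq> 4 \<and> f 5 \<noteq> 5" using inj[of 5 2] inj[of 5 4] inj[of 5 1] inj[of 5 3] h307 h306 h303 h315 by auto
        have "f 5 = 3 \<or> f 5 = 6" using v5 n316 by auto
        then show ?thesis
        proof (elim disjE)
          assume h317: "f 5 = 3"
          show ?thesis using c[of 3] h315 h317 h315 by simp
        next
          assume h318: "f 5 = 6"
          have h319: "f 6 = 3" using c[of 3] h315 h318 by simp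
          show ?thesis using h303 h307 h315 h306 h318 h319 by (simp add: O3_def I6_def)
        qed
      next
        assume h320: "f 3 = 6"
        have n321: "f 6 \<noteq> 1 \<and> f 6 \<noteq> 2 \<and> f 6 \<noteq> 4 \<and> f 6 \<noteq> 6" using inj[of 6 2] inj[of 6 4] inj[of 6 1] inj[of 6 3] h307 h306 h303 h320 by auto
        have "f 6 = 3 \<or> f 6 = 5" using v6 n321 by auto
        then show ?thesis
        proof (elim disjE)
          assume h322: "f 6 = 3"
          show ?thesis using c[of 3] h320 h322 h320 by simp
        next
          assume h323: "f 6 = 5"
          have h324: "f 5 = 3" using c[of 3] h320 h323 by simp
          show ?thesis using h303 h307 h320 h306 h324 h323 by (simp add: O3_def I6_def)
        qed
      qed
    next
      assume h325: "f 4 = 3"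
      have h326: "f 3 = 1" using c[of 1] h303 h325 by simp
      have n327: "f 2 \<noteq> 1 \<and> f 2 \<noteq> 3 \<and> f 2 \<noteq> 4" using inj[of 2 3] inj[of 2 4] inj[of 2 1] h326 h325 h303 by auto
      have "f 2 = 2 \<or> f 2 = 5 \<or> f 2 = 6" using v2 n327 by auto
      then show ?thesis
      proof (elim disjE)
        assume h328: "f 2 = 2"
        have n329: "f 5 \<noteq> 1 \<and> f 5 \<noteq> 2 \<and> f 5 \<noteq> 3 \<and> f 5 \<noteq> 4" using inj[of 5 3] inj[of 5 2] inj[of 5 4] inj[of 5 1] h326 h328 h325 h303 by auto
        have "f 5 = 5 \<or> f 5 = 6" using v5 n329 by auto
        then show ?thesis
        proof (elim disjE)
          assume h330: "f 5 = 5"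
          have h331: "f 6 = 6" using v6 inj[of 6 3] h326 inj[of 6 2] h328 inj[of 6 4] h325 inj[of 6 1] h303 inj[of 6 5] h330 by auto
          show ?thesis using h303 h328 h326 h325 h330 h331 by (simp add: O3_def I6_def)
        next
          assume h332: "f 5 = 6"
          have h333: "f 6 = 5" using v6 inj[of 6 3] h326 inj[of 6 2] h328 inj[of 6 4] h325 inj[of 6 1] h303 inj[of 6 5] h332 by auto
          show ?thesis using c[of 5] h332 h333 h332 by simp
        qed
      next
        assume h334: "f 2 = 5"
        have n335: "f 5 \<noteq> 1 \<and> f 5 \<noteq> 3 \<and> f 5 \<noteq> 4 \<and> f 5 \<noteq> 5" using inj[of 5 3] inj[of 5 4] inj[of 5 1] inj[of 5 2] h326 h325 h303 h334 by auto
        have "f 5 = 2 \<or> f 5 = 6" using v5 n335 by auto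
        then show ?thesis
        proof (elim disjE)
          assume h336: "f 5 = 2"
          show ?thesis using c[of 2] h334 h336 h334 by simp
        next
          assume h337: "f 5 = 6"
          have h338: "f 6 = 2" using c[of 2] h334 h337 by simp
          show ?thesis using h303 h334 h326 h325 h337 h338 by (simp add: O3_def I6_def)
        qed
      next
        assume h339: "f 2 = 6"
        have n340: "f 6 \<noteq> 1 \<and> f 6 \<noteq> 3 \<and> f 6 \<noteq> 4 \<and> f 6 \<noteq> 6" using inj[of 6 3] inj[of 6 4] inj[of 6 1] inj[of 6 2] h326 h325 h303 h339 by auto
        have "f 6 = 2 \<or> f 6 = 5" using v6 n340 by auto
        then show ?thesis
        proof (elim disjE)
          assume h341: "f 6 = 2"
          show ?thesis using c[of 2] h339 h341 h339 by simp
        next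
          assume h342: "f 6 = 5"
          have h343: "f 5 = 2" using c[of 2] h339 h342 by simp
          show ?thesis using h303 h339 h326 h325 h343 h342 by (simp add: O3_def I6_def)
        qed
      qed
    next
      assume h344: "f 4 = 5"
      have h345: "f 5 = 1" using c[of 1] h303 h344 by simp
      have n346: "f 2 \<noteq> 1 \<and> f 2 \<noteq> 4 \<and> f 2 \<noteq> 5" using inj[of 2 5] inj[of 2 1] inj[of 2 4] h345 h303 h344 by auto
      have "f 2 = 2 \<or> f 2 = 3 \<or> f 2 = 6" using v2 n346 by auto
      then show ?thesis
      proof (elim disjE)
        assume h347: "f 2 = 2"
        have n348: "f 3 \<noteq> 1 \<and> f 3 \<noteq> 2 \<and> f 3 \<noteq> 4 \<and> f 3 \<noteq> 5" using inj[of 3 5] inj[of 3 2] inj[of 3 1] inj[of 3 4] h345 h347 h303 h344 by auto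
        have "f 3 = 3 \<or> f 3 = 6" using v3 n348 by auto
        then show ?thesis
        proof (elim disjE)
          assume h349: "f 3 = 3"
          have h350: "f 6 = 6" using v6 inj[of 6 5] h345 inj[of 6 2] h347 inj[of 6 3] h349 inj[of 6 1] h303 inj[of 6 4] h344 by auto
          show ?thesis using h303 h347 h349 h344 h345 h350 by (simp add: O3_def I6_def)
        next
          assume h351: "f 3 = 6"
          have h352: "f 6 = 3" using v6 inj[of 6 5] h345 inj[of 6 2] h347 inj[of 6 1] h303 inj[of 6 4] h344 inj[of 6 3] h351 by auto
          show ?thesis using c[of 3] h351 h352 h351 by simp
        qed
      next
        assume h353: "f 2 = 3"
        have n354: "f 3 \<noteq> 1 \<and> f 3 \<noteq> 3 \<and> f 3 \<noteq> 4 \<and> f 3 \<noteq> 5" using inj[of 3 5] inj[of 3 2] inj[of 3 1] inj[of 3 4] h345 h353 h303 h344 by auto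
        have "f 3 = 2 \<or> f 3 = 6" using v3 n354 by auto
        then show ?thesis
        proof (elim disjE)
          assume h355: "f 3 = 2"
          show ?thesis using c[of 2] h353 h355 h353 by simp
        next
          assume h356: "f 3 = 6"
          have h357: "f 6 = 2" using c[of 2] h353 h356 by simp
          show ?thesis using h303 h353 h356 h344 h345 h357 by (simp add: O3_def I6_def)
        qed
      next
        assume h358: "f 2 = 6"
        have n359: "f 6 \<noteq> 1 \<and> f 6 \<noteq> 4 \<and> f 6 \<noteq> 5 \<and> f 6 \<noteq> 6" using inj[of 6 5] inj[of 6 1] inj[of 6 4] inj[of 6 2] h345 h303 h344 h358 by auto
        have "f 6 = 2 \<or> f 6 = 3" using v6 n359 by auto
        then show ?thesis
        proof (elim disjE)
          assume h360: "f 6 = 2"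
          show ?thesis using c[of 2] h358 h360 h358 by simp
        next
          assume h361: "f 6 = 3"
          have h362: "f 3 = 2" using c[of 2] h358 h361 by simp
          show ?thesis using h303 h358 h362 h344 h345 h361 by (simp add: O3_def I6_def)
        qed
      qed
    next
      assume h363: "f 4 = 6"
      have h364: "f 6 = 1" using c[of 1] h303 h363 by simp
      have n365: "f 2 \<noteq> 1 \<and> f 2 \<noteq> 4 \<and> f 2 \<noteq> 6" using inj[of 2 6] inj[of 2 1] inj[of 2 4] h364 h303 h363 by auto
      have "f 2 = 2 \<or> f 2 = 3 \<or> f 2 = 5" using v2 n365 by auto
      then show ?thesis
      proof (elim disjE)
        assume h366: "f 2 = 2"
        have n367: "f 3 \<noteq> 1 \<and> f 3 \<noteq> 2 \<and> f 3 \<noteq> 4 \<and> f 3 \<noteq> 6" using inj[of 3 6] inj[of 3 2] inj[of 3 1] inj[of 3 4] h364 h366 h303 h363 by auto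
        have "f 3 = 3 \<or> f 3 = 5" using v3 n367 by auto
        then show ?thesis
        proof (elim disjE)
          assume h368: "f 3 = 3"
          have h369: "f 5 = 5" using v5 inj[of 5 6] h364 inj[of 5 2] h366 inj[of 5 3] h368 inj[of 5 1] h303 inj[of 5 4] h363 by auto
          show ?thesis using h303 h366 h368 h363 h369 h364 by (simp add: O3_def I6_def)
        next
          assume h370: "f 3 = 5"
          have h371: "f 5 = 3" using v5 inj[of 5 6] h364 inj[of 5 2] h366 inj[of 5 1] h303 inj[of 5 3] h370 inj[of 5 4] h363 by auto
          show ?thesis using c[of 3] h370 h371 h370 by simp
        qed
      next
        assume h372: "f 2 = 3"
        have n373: "f 3 \<noteq> 1 \<and> f 3 \<noteq> 3 \<and> f 3 \<noteq> 4 \<and> f 3 \<noteq> 6" using inj[of 3 6] inj[of 3 2] inj[of 3 1] inj[of 3 4] h364 h372 h303 h363 by auto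
        have "f 3 = 2 \<or> f 3 = 5" using v3 n373 by auto
        then show ?thesis
        proof (elim disjE)
          assume h374: "f 3 = 2"
          show ?thesis using c[of 2] h372 h374 h372 by simp
        next
          assume h375: "f 3 = 5"
          have h376: "f 5 = 2" using c[of 2] h372 h375 by simp
          show ?thesis using h303 h372 h375 h363 h376 h364 by (simp add: O3_def I6_def)
        qed
      next
        assume h377: "f 2 = 5"
        have n378: "f 5 \<noteq> 1 \<and> f 5 \<noteq> 4 \<and> f 5 \<noteq> 5 \<and> f 5 \<noteq> 6" using inj[of 5 6] inj[of 5 1] inj[of 5 2] inj[of 5 4] h364 h303 h377 h363 by auto
        have "f 5 = 2 \<or> f 5 = 3" using v5 n378 by auto
        then show ?thesis
        proof (elim disjE)
          assume h379: "f 5 = 2"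
          show ?thesis using c[of 2] h377 h379 h377 by simp
        next
          assume h380: "f 5 = 3"
          have h381: "f 3 = 2" using c[of 2] h377 h380 by simp
          show ?thesis using h303 h377 h381 h363 h380 h364 by (simp add: O3_def I6_def)
        qed
      qed
    qed
  next
    assume h382: "f 1 = 5"
    have n383: "f 5 \<noteq> 5" using inj[of 5 1] h382 by auto
    have "f 5 = 1 \<or> f 5 = 2 \<or> f 5 = 3 \<or> f 5 = 4 \<or> f 5 = 6" using v5 n383 by auto
    then show ?thesis
    proof (elim disjE)
      assume h384: "f 5 = 1"
      show ?thesis using c[of 1] h382 h384 h382 by simp
    next
      assume h385: "f 5 = 2"
      have h386: "f 2 = 1" using c[of 1] h382 h385 by simp
      have n387: "f 3 \<noteq> 1 \<and> f 3 \<noteq> 2 \<and> f 3 \<noteq> 5" using inj[of 3 2] inj[of 3 5] inj[of 3 1] h386 h385 h382 by auto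
      have "f 3 = 3 \<or> f 3 = 4 \<or> f 3 = 6" using v3 n387 by auto
      then show ?thesis
      proof (elim disjE)
        assume h388: "f 3 = 3"
        have n389: "f 4 \<noteq> 1 \<and> f 4 \<noteq> 2 \<and> f 4 \<noteq> 3 \<and> f 4 \<noteq> 5" using inj[of 4 2] inj[of 4 5] inj[of 4 3] inj[of 4 1] h386 h385 h388 h382 by auto
        have "f 4 = 4 \<or> f 4 = 6" using v4 n389 by auto
        then show ?thesis
        proof (elim disjE)
          assume h390: "f 4 = 4"
          have h391: "f 6 = 6" using v6 inj[of 6 2] h386 inj[of 6 5] h385 inj[of 6 3] h388 inj[of 6 4] h390 inj[of 6 1] h382 by auto
          show ?thesis using h382 h386 h388 h390 h385 h391 by (simp add: O3_def I6_def)
        next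
          assume h392: "f 4 = 6"
          have h393: "f 6 = 4" using v6 inj[of 6 2] h386 inj[of 6 5] h385 inj[of 6 3] h388 inj[of 6 1] h382 inj[of 6 4] h392 by auto
          show ?thesis using c[of 4] h392 h393 h392 by simp
        qed
      next
        assume h394: "f 3 = 4"
        have n395: "f 4 \<noteq> 1 \<and> f 4 \<noteq> 2 \<and> f 4 \<noteq> 4 \<and> f 4 \<noteq> 5" using inj[of 4 2] inj[of 4 5] inj[of 4 3] inj[of 4 1] h386 h385 h394 h382 by auto
        have "f 4 = 3 \<or> f 4 = 6" using v4 n395 by auto
        then show ?thesis
        proof (elim disjE)
          assume h396: "f 4 = 3"
          show ?thesis using c[of 3] h394 h396 h394 by simp
        next
          assume h397: "f 4 = 6"
          have h398: "f 6 = 3" using c[of 3] h394 h397 by simp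
          show ?thesis using h382 h386 h394 h397 h385 h398 by (simp add: O3_def I6_def)
        qed
      next
        assume h399: "f 3 = 6"
        have n400: "f 6 \<noteq> 1 \<and> f 6 \<noteq> 2 \<and> f 6 \<noteq> 5 \<and> f 6 \<noteq> 6" using inj[of 6 2] inj[of 6 5] inj[of 6 1] inj[of 6 3] h386 h385 h382 h399 by auto
        have "f 6 = 3 \<or> f 6 = 4" using v6 n400 by auto
        then show ?thesis
        proof (elim disjE)
          assume h401: "f 6 = 3"
          show ?thesis using c[of 3] h399 h401 h399 by simp
        next
          assume h402: "f 6 = 4"
          have h403: "f 4 = 3" using c[of 3] h399 h402 by simp
          show ?thesis using h382 h386 h399 h403 h385 h402 by (simp add: O3_def I6_def)
        qed
      qed
    next
      assume h404: "f 5 = 3"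
      have h405: "f 3 = 1" using c[of 1] h382 h404 by simp
      have n406: "f 2 \<noteq> 1 \<and> f 2 \<noteq> 3 \<and> f 2 \<noteq> 5" using inj[of 2 3] inj[of 2 5] inj[of 2 1] h405 h404 h382 by auto
      have "f 2 = 2 \<or> f 2 = 4 \<or> f 2 = 6" using v2 n406 by auto
      then show ?thesis
      proof (elim disjE)
        assume h407: "f 2 = 2"
        have n408: "f 4 \<noteq> 1 \<and> f 4 \<noteq> 2 \<and> f 4 \<noteq> 3 \<and> f 4 \<noteq> 5" using inj[of 4 3] inj[of 4 2] inj[of 4 5] inj[of 4 1] h405 h407 h404 h382 by auto
        have "f 4 = 4 \<or> f 4 = 6" using v4 n408 by auto
        then show ?thesis
        proof (elim disjE)
          assume h409: "f 4 = 4"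
          have h410: "f 6 = 6" using v6 inj[of 6 3] h405 inj[of 6 2] h407 inj[of 6 5] h404 inj[of 6 4] h409 inj[of 6 1] h382 by auto
          show ?thesis using h382 h407 h405 h409 h404 h410 by (simp add: O3_def I6_def)
        next
          assume h411: "f 4 = 6"
          have h412: "f 6 = 4" using v6 inj[of 6 3] h405 inj[of 6 2] h407 inj[of 6 5] h404 inj[of 6 1] h382 inj[of 6 4] h411 by auto
          show ?thesis using c[of 4] h411 h412 h411 by simp
        qed
      next
        assume h413: "f 2 = 4"
        have n414: "f 4 \<noteq> 1 \<and> f 4 \<noteq> 3 \<and> f 4 \<noteq> 4 \<and> f 4 \<noteq> 5" using inj[of 4 3] inj[of 4 5] inj[of 4 2] inj[of 4 1] h405 h404 h413 h382 by auto
        have "f 4 = 2 \<or> f 4 = 6" using v4 n414 by auto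
        then show ?thesis
        proof (elim disjE)
          assume h415: "f 4 = 2"
          show ?thesis using c[of 2] h413 h415 h413 by simp
        next
          assume h416: "f 4 = 6"
          have h417: "f 6 = 2" using c[of 2] h413 h416 by simp
          show ?thesis using h382 h413 h405 h416 h404 h417 by (simp add: O3_def I6_def)
        qed
      next
        assume h418: "f 2 = 6"
        have n419: "f 6 \<noteq> 1 \<and> f 6 \<noteq> 3 \<and> f 6 \<noteq> 5 \<and> f 6 \<noteq> 6" using inj[of 6 3] inj[of 6 5] inj[of 6 1] inj[of 6 2] h405 h404 h382 h418 by auto
        have "f 6 = 2 \<or> f 6 = 4" using v6 n419 by auto
        then show ?thesis
        proof (elim disjE)
          assume h420: "f 6 = 2"
          show ?thesis using c[of 2] h418 h420 h418 by simp
        next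
          assume h421: "f 6 = 4"
          have h422: "f 4 = 2" using c[of 2] h418 h421 by simp
          show ?thesis using h382 h418 h405 h422 h404 h421 by (simp add: O3_def I6_def)
        qed
      qed
    next
      assume h423: "f 5 = 4"
      have h424: "f 4 = 1" using c[of 1] h382 h423 by simp
      have n425: "f 2 \<noteq> 1 \<and> f 2 \<noteq> 4 \<and> f 2 \<noteq> 5" using inj[of 2 4] inj[of 2 5] inj[of 2 1] h424 h423 h382 by auto
      have "f 2 = 2 \<or> f 2 = 3 \<or> f 2 = 6" using v2 n425 by auto
      then show ?thesis
      proof (elim disjE)
        assume h426: "f 2 = 2"
        have n427: "f 3 \<noteq> 1 \<and> f 3 \<noteq> 2 \<and> f 3 \<noteq> 4 \<and> f 3 \<noteq> 5" using inj[of 3 4] inj[of 3 2] inj[of 3 5] inj[of 3 1] h424 h426 h423 h382 by auto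
        have "f 3 = 3 \<or> f 3 = 6" using v3 n427 by auto
        then show ?thesis
        proof (elim disjE)
          assume h428: "f 3 = 3"
          have h429: "f 6 = 6" using v6 inj[of 6 4] h424 inj[of 6 2] h426 inj[of 6 3] h428 inj[of 6 5] h423 inj[of 6 1] h382 by auto
          show ?thesis using h382 h426 h428 h424 h423 h429 by (simp add: O3_def I6_def)
        next
          assume h430: "f 3 = 6"
          have h431: "f 6 = 3" using v6 inj[of 6 4] h424 inj[of 6 2] h426 inj[of 6 5] h423 inj[of 6 1] h382 inj[of 6 3] h430 by auto
          show ?thesis using c[of 3] h430 h431 h430 by simp
        qed
      next
        assume h432: "f 2 = 3"
        have n433: "f 3 \<noteq> 1 \<and> f 3 \<noteq> 3 \<and> f 3 \<noteq> 4 \<and> f 3 \<noteq> 5" using inj[of 3 4] inj[of 3 2] inj[of 3 5] inj[of 3 1] h424 h432 h423 h382 by auto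
        have "f 3 = 2 \<or> f 3 = 6" using v3 n433 by auto
        then show ?thesis
        proof (elim disjE)
          assume h434: "f 3 = 2"
          show ?thesis using c[of 2] h432 h434 h432 by simp
        next
          assume h435: "f 3 = 6"
          have h436: "f 6 = 2" using c[of 2] h432 h435 by simp
          show ?thesis using h382 h432 h435 h424 h423 h436 by (simp add: O3_def I6_def)
        qed
      next
        assume h437: "f 2 = 6"
        have n438: "f 6 \<noteq> 1 \<and> f 6 \<noteq> 4 \<and> f 6 \<noteq> 5 \<and> f 6 \<noteq> 6" using inj[of 6 4] inj[of 6 5] inj[of 6 1] inj[of 6 2] h424 h423 h382 h437 by auto
        have "f 6 = 2 \<or> f 6 = 3" using v6 n438 by auto
        then show ?thesis
        proof (elim disjE)
          assume h439: "f 6 = 2"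
          show ?thesis using c[of 2] h437 h439 h437 by simp
        next
          assume h440: "f 6 = 3"
          have h441: "f 3 = 2" using c[of 2] h437 h440 by simp
          show ?thesis using h382 h437 h441 h424 h423 h440 by (simp add: O3_def I6_def)
        qed
      qed
    next
      assume h442: "f 5 = 6"
      have h443: "f 6 = 1" using c[of 1] h382 h442 by simp
      have n444: "f 2 \<noteq> 1 \<and> f 2 \<noteq> 5 \<and> f 2 \<noteq> 6" using inj[of 2 6] inj[of 2 1] inj[of 2 5] h443 h382 h442 by auto
      have "f 2 = 2 \<or> f 2 = 3 \<or> f 2 = 4" using v2 n444 by auto
      then show ?thesis
      proof (elim disjE)
        assume h445: "f 2 = 2"
        have n446: "f 3 \<noteq> 1 \<and> f 3 \<noteq> 2 \<and> f 3 \<noteq> 5 \<and> f 3 \<noteq> 6" using inj[of 3 6] inj[of 3 2] inj[of 3 1] inj[of 3 5] h443 h445 h382 h442 by auto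
        have "f 3 = 3 \<or> f 3 = 4" using v3 n446 by auto
        then show ?thesis
        proof (elim disjE)
          assume h447: "f 3 = 3"
          have h448: "f 4 = 4" using v4 inj[of 4 6] h443 inj[of 4 2] h445 inj[of 4 3] h447 inj[of 4 1] h382 inj[of 4 5] h442 by auto
          show ?thesis using h382 h445 h447 h448 h442 h443 by (simp add: O3_def I6_def)
        next
          assume h449: "f 3 = 4"
          have h450: "f 4 = 3" using v4 inj[of 4 6] h443 inj[of 4 2] h445 inj[of 4 3] h449 inj[of 4 1] h382 inj[of 4 5] h442 by auto
          show ?thesis using c[of 3] h449 h450 h449 by simp
        qed
      next
        assume h451: "f 2 = 3"
        have n452: "f 3 \<noteq> 1 \<and> f 3 \<noteq> 3 \<and> f 3 \<noteq> 5 \<and> f 3 \<noteq> 6" using inj[of 3 6] inj[of 3 2] inj[of 3 1] inj[of 3 5] h443 h451 h382 h442 by auto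
        have "f 3 = 2 \<or> f 3 = 4" using v3 n452 by auto
        then show ?thesis
        proof (elim disjE)
          assume h453: "f 3 = 2"
          show ?thesis using c[of 2] h451 h453 h451 by simp
        next
          assume h454: "f 3 = 4"
          have h455: "f 4 = 2" using c[of 2] h451 h454 by simp
          show ?thesis using h382 h451 h454 h455 h442 h443 by (simp add: O3_def I6_def)
        qed
      next
        assume h456: "f 2 = 4"
        have n457: "f 4 \<noteq> 1 \<and> f 4 \<noteq> 4 \<and> f 4 \<noteq> 5 \<and> f 4 \<noteq> 6" using inj[of 4 6] inj[of 4 2] inj[of 4 1] inj[of 4 5] h443 h456 h382 h442 by auto
        have "f 4 = 2 \<or> f 4 = 3" using v4 n457 by auto
        then show ?thesis
        proof (elim disjE)
          assume h458: "f 4 = 2"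
          show ?thesis using c[of 2] h456 h458 h456 by simp
        next
          assume h459: "f 4 = 3"
          have h460: "f 3 = 2" using c[of 2] h456 h459 by simp
          show ?thesis using h382 h456 h460 h459 h442 h443 by (simp add: O3_def I6_def)
        qed
      qed
    qed
  next
    assume h461: "f 1 = 6"
    have n462: "f 6 \<noteq> 6" using inj[of 6 1] h461 by auto
    have "f 6 = 1 \<or> f 6 = 2 \<or> f 6 = 3 \<or> f 6 = 4 \<or> f 6 = 5" using v6 n462 by auto
    then show ?thesis
    proof (elim disjE)
      assume h463: "f 6 = 1"
      show ?thesis using c[of 1] h461 h463 h461 by simp
    next
      assume h464: "f 6 = 2"
      have h465: "f 2 = 1" using c[of 1] h461 h464 by simp
      have n466: "f 3 \<noteq> 1 \<and> f 3 \<noteq> 2 \<and> f 3 \<noteq> 6" using inj[of 3 2] inj[of 3 6] inj[of 3 1] h465 h464 h461 by auto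
      have "f 3 = 3 \<or> f 3 = 4 \<or> f 3 = 5" using v3 n466 by auto
      then show ?thesis
      proof (elim disjE)
        assume h467: "f 3 = 3"
        have n468: "f 4 \<noteq> 1 \<and> f 4 \<noteq> 2 \<and> f 4 \<noteq> 3 \<and> f 4 \<noteq> 6" using inj[of 4 2] inj[of 4 6] inj[of 4 3] inj[of 4 1] h465 h464 h467 h461 by auto
        have "f 4 = 4 \<or> f 4 = 5" using v4 n468 by auto
        then show ?thesis
        proof (elim disjE)
          assume h469: "f 4 = 4"
          have h470: "f 5 = 5" using v5 inj[of 5 2] h465 inj[of 5 6] h464 inj[of 5 3] h467 inj[of 5 4] h469 inj[of 5 1] h461 by auto
          show ?thesis using h461 h465 h467 h469 h470 h464 by (simp add: O3_def I6_def)
        next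
          assume h471: "f 4 = 5"
          have h472: "f 5 = 4" using v5 inj[of 5 2] h465 inj[of 5 6] h464 inj[of 5 3] h467 inj[of 5 4] h471 inj[of 5 1] h461 by auto
          show ?thesis using c[of 4] h471 h472 h471 by simp
        qed
      next
        assume h473: "f 3 = 4"
        have n474: "f 4 \<noteq> 1 \<and> f 4 \<noteq> 2 \<and> f 4 \<noteq> 4 \<and> f 4 \<noteq> 6" using inj[of 4 2] inj[of 4 6] inj[of 4 3] inj[of 4 1] h465 h464 h473 h461 by auto
        have "f 4 = 3 \<or> f 4 = 5" using v4 n474 by auto
        then show ?thesis
        proof (elim disjE)
          assume h475: "f 4 = 3"
          show ?thesis using c[of 3] h473 h475 h473 by simp
        next
          assume h476: "f 4 = 5"
          have h477: "f 5 = 3" using c[of 3] h473 h476 by simp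
          show ?thesis using h461 h465 h473 h476 h477 h464 by (simp add: O3_def I6_def)
        qed
      next
        assume h478: "f 3 = 5"
        have n479: "f 5 \<noteq> 1 \<and> f 5 \<noteq> 2 \<and> f 5 \<noteq> 5 \<and> f 5 \<noteq> 6" using inj[of 5 2] inj[of 5 6] inj[of 5 3] inj[of 5 1] h465 h464 h478 h461 by auto
        have "f 5 = 3 \<or> f 5 = 4" using v5 n479 by auto
        then show ?thesis
        proof (elim disjE)
          assume h480: "f 5 = 3"
          show ?thesis using c[of 3] h478 h480 h478 by simp
        next
          assume h481: "f 5 = 4"
          have h482: "f 4 = 3" using c[of 3] h478 h481 by simp
          show ?thesis using h461 h465 h478 h482 h481 h464 by (simp add: O3_def I6_def)
        qed
      qed
    next
      assume h483: "f 6 = 3"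
      have h484: "f 3 = 1" using c[of 1] h461 h483 by simp
      have n485: "f 2 \<noteq> 1 \<and> f 2 \<noteq> 3 \<and> f 2 \<noteq> 6" using inj[of 2 3] inj[of 2 6] inj[of 2 1] h484 h483 h461 by auto
      have "f 2 = 2 \<or> f 2 = 4 \<or> f 2 = 5" using v2 n485 by auto
      then show ?thesis
      proof (elim disjE)
        assume h486: "f 2 = 2"
        have n487: "f 4 \<noteq> 1 \<and> f 4 \<noteq> 2 \<and> f 4 \<noteq> 3 \<and> f 4 \<noteq> 6" using inj[of 4 3] inj[of 4 2] inj[of 4 6] inj[of 4 1] h484 h486 h483 h461 by auto
        have "f 4 = 4 \<or> f 4 = 5" using v4 n487 by auto
        then show ?thesis
        proof (elim disjE)
          assume h488: "f 4 = 4"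
          have h489: "f 5 = 5" using v5 inj[of 5 3] h484 inj[of 5 2] h486 inj[of 5 6] h483 inj[of 5 4] h488 inj[of 5 1] h461 by auto
          show ?thesis using h461 h486 h484 h488 h489 h483 by (simp add: O3_def I6_def)
        next
          assume h490: "f 4 = 5"
          have h491: "f 5 = 4" using v5 inj[of 5 3] h484 inj[of 5 2] h486 inj[of 5 6] h483 inj[of 5 4] h490 inj[of 5 1] h461 by auto
          show ?thesis using c[of 4] h490 h491 h490 by simp
        qed
      next
        assume h492: "f 2 = 4"
        have n493: "f 4 \<noteq> 1 \<and> f 4 \<noteq> 3 \<and> f 4 \<noteq> 4 \<and> f 4 \<noteq> 6" using inj[of 4 3] inj[of 4 6] inj[of 4 2] inj[of 4 1] h484 h483 h492 h461 by auto
        have "f 4 = 2 \<or> f 4 = 5" using v4 n493 by auto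
        then show ?thesis
        proof (elim disjE)
          assume h494: "f 4 = 2"
          show ?thesis using c[of 2] h492 h494 h492 by simp
        next
          assume h495: "f 4 = 5"
          have h496: "f 5 = 2" using c[of 2] h492 h495 by simp
          show ?thesis using h461 h492 h484 h495 h496 h483 by (simp add: O3_def I6_def)
        qed
      next
        assume h497: "f 2 = 5"
        have n498: "f 5 \<noteq> 1 \<and> f 5 \<noteq> 3 \<and> f 5 \<noteq> 5 \<and> f 5 \<noteq> 6" using inj[of 5 3] inj[of 5 6] inj[of 5 2] inj[of 5 1] h484 h483 h497 h461 by auto
        have "f 5 = 2 \<or> f 5 = 4" using v5 n498 by auto
        then show ?thesis
        proof (elim disjE)
          assume h499: "f 5 = 2"
          show ?thesis using c[of 2] h497 h499 h497 by simp
        next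
          assume h500: "f 5 = 4"
          have h501: "f 4 = 2" using c[of 2] h497 h500 by simp
          show ?thesis using h461 h497 h484 h501 h500 h483 by (simp add: O3_def I6_def)
        qed
      qed
    next
      assume h502: "f 6 = 4"
      have h503: "f 4 = 1" using c[of 1] h461 h502 by simp
      have n504: "f 2 \<noteq> 1 \<and> f 2 \<noteq> 4 \<and> f 2 \<noteq> 6" using inj[of 2 4] inj[of 2 6] inj[of 2 1] h503 h502 h461 by auto
      have "f 2 = 2 \<or> f 2 = 3 \<or> f 2 = 5" using v2 n504 by auto
      then show ?thesis
      proof (elim disjE)
        assume h505: "f 2 = 2"
        have n506: "f 3 \<noteq> 1 \<and> f 3 \<noteq> 2 \<and> f 3 \<noteq> 4 \<and> f 3 \<noteq> 6" using inj[of 3 4] inj[of 3 2] inj[of 3 6] inj[of 3 1] h503 h505 h502 h461 by auto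
        have "f 3 = 3 \<or> f 3 = 5" using v3 n506 by auto
        then show ?thesis
        proof (elim disjE)
          assume h507: "f 3 = 3"
          have h508: "f 5 = 5" using v5 inj[of 5 4] h503 inj[of 5 2] h505 inj[of 5 3] h507 inj[of 5 6] h502 inj[of 5 1] h461 by auto
          show ?thesis using h461 h505 h507 h503 h508 h502 by (simp add: O3_def I6_def)
        next
          assume h509: "f 3 = 5"
          have h510: "f 5 = 3" using v5 inj[of 5 4] h503 inj[of 5 2] h505 inj[of 5 6] h502 inj[of 5 3] h509 inj[of 5 1] h461 by auto
          show ?thesis using c[of 3] h509 h510 h509 by simp
        qed
      next
        assume h511: "f 2 = 3"
        have n512: "f 3 \<noteq> 1 \<and> f 3 \<noteq> 3 \<and> f 3 \<noteq> 4 \<and> f 3 \<noteq> 6" using inj[of 3 4] inj[of 3 2] inj[of 3 6] inj[of 3 1] h503 h511 h502 h461 by auto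
        have "f 3 = 2 \<or> f 3 = 5" using v3 n512 by auto
        then show ?thesis
        proof (elim disjE)
          assume h513: "f 3 = 2"
          show ?thesis using c[of 2] h511 h513 h511 by simp
        next
          assume h514: "f 3 = 5"
          have h515: "f 5 = 2" using c[of 2] h511 h514 by simp
          show ?thesis using h461 h511 h514 h503 h515 h502 by (simp add: O3_def I6_def)
        qed
      next
        assume h516: "f 2 = 5"
        have n517: "f 5 \<noteq> 1 \<and> f 5 \<noteq> 4 \<and> f 5 \<noteq> 5 \<and> f 5 \<noteq> 6" using inj[of 5 4] inj[of 5 6] inj[of 5 2] inj[of 5 1] h503 h502 h516 h461 by auto
        have "f 5 = 2 \<or> f 5 = 3" using v5 n517 by auto
        then show ?thesis
        proof (elim disjE)
          assume h518: "f 5 = 2"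
          show ?thesis using c[of 2] h516 h518 h516 by simp
        next
          assume h519: "f 5 = 3"
          have h520: "f 3 = 2" using c[of 2] h516 h519 by simp
          show ?thesis using h461 h516 h520 h503 h519 h502 by (simp add: O3_def I6_def)
        qed
      qed
    next
      assume h521: "f 6 = 5"
      have h522: "f 5 = 1" using c[of 1] h461 h521 by simp
      have n523: "f 2 \<noteq> 1 \<and> f 2 \<noteq> 5 \<and> f 2 \<noteq> 6" using inj[of 2 5] inj[of 2 6] inj[of 2 1] h522 h521 h461 by auto
      have "f 2 = 2 \<or> f 2 = 3 \<or> f 2 = 4" using v2 n523 by auto
      then show ?thesis
      proof (elim disjE)
        assume h524: "f 2 = 2"
        have n525: "f 3 \<noteq> 1 \<and> f 3 \<noteq> 2 \<and> f 3 \<noteq> 5 \<and> f 3 \<noteq> 6" using inj[of 3 5] inj[of 3 2] inj[of 3 6] inj[of 3 1] h522 h524 h521 h461 by auto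
        have "f 3 = 3 \<or> f 3 = 4" using v3 n525 by auto
        then show ?thesis
        proof (elim disjE)
          assume h526: "f 3 = 3"
          have h527: "f 4 = 4" using v4 inj[of 4 5] h522 inj[of 4 2] h524 inj[of 4 3] h526 inj[of 4 6] h521 inj[of 4 1] h461 by auto
          show ?thesis using h461 h524 h526 h527 h522 h521 by (simp add: O3_def I6_def)
        next
          assume h528: "f 3 = 4"
          have h529: "f 4 = 3" using v4 inj[of 4 5] h522 inj[of 4 2] h524 inj[of 4 3] h528 inj[of 4 6] h521 inj[of 4 1] h461 by auto
          show ?thesis using c[of 3] h528 h529 h528 by simp
        qed
      next
        assume h530: "f 2 = 3"
        have n531: "f 3 \<noteq> 1 \<and> f 3 \<noteq> 3 \<and> f 3 \<noteq> 5 \<and> f 3 \<noteq> 6" using inj[of 3 5] inj[of 3 2] inj[of 3 6] inj[of 3 1] h522 h530 h521 h461 by auto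
        have "f 3 = 2 \<or> f 3 = 4" using v3 n531 by auto
        then show ?thesis
        proof (elim disjE)
          assume h532: "f 3 = 2"
          show ?thesis using c[of 2] h530 h532 h530 by simp
        next
          assume h533: "f 3 = 4"
          have h534: "f 4 = 2" using c[of 2] h530 h533 by simp
          show ?thesis using h461 h530 h533 h534 h522 h521 by (simp add: O3_def I6_def)
        qed
      next
        assume h535: "f 2 = 4"
        have n536: "f 4 \<noteq> 1 \<and> f 4 \<noteq> 4 \<and> f 4 \<noteq> 5 \<and> f 4 \<noteq> 6" using inj[of 4 5] inj[of 4 2] inj[of 4 6] inj[of 4 1] h522 h535 h521 h461 by auto
        have "f 4 = 2 \<or> f 4 = 3" using v4 n536 by auto
        then show ?thesis
        proof (elim disjE)
          assume h537: "f 4 = 2"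
          show ?thesis using c[of 2] h535 h537 h535 by simp
        next
          assume h538: "f 4 = 3"
          have h539: "f 3 = 2" using c[of 2] h535 h538 by simp
          show ?thesis using h461 h535 h539 h538 h522 h521 by (simp add: O3_def I6_def)
        qed
      qed
    qed
  qed
qed
definition fl :: "(nat \<Rightarrow> nat) \<Rightarrow> nat list" where "fl f = map f I6"
definition toF :: "nat list \<Rightarrow> nat \<Rightarrow> nat" where "toF t x = (if x \<in> {1..6} then ap t x else x)"

lemma ap_fl: "x \<in> {1..6} \<Longrightarrow> ap (fl f) x = f x"
  using six[of x] by (auto simp: fl_def I6_def ap_def)

lemma fl_comp: assumes "g permutes {1..6}" shows "fl (f \<circ> g) = lc (fl f) (fl g)"
proof -
  have "lc (fl f) (fl g) = map (\<lambda>i. ap (fl f) (g i)) I6" by (simp add: lc_def fl_def)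
  also have "\<dots> = map (\<lambda>i. f (g i)) I6"
  proof (rule map_cong[OF refl], rule ap_fl)
    fix i assume "i \<in> set I6"
    then show "g i \<in> {1..6}" using permutes_in_image[OF assms, of i] by (auto simp: I6_def)
  qed
  finally show ?thesis by (simp add: fl_def)
qed

lemma fl_inj: assumes "f permutes {1..6}" "g permutes {1..6}" "fl f = fl g" shows "f = g"
proof
  fix x
  show "f x = g x"
  proof (cases "x \<in> {1..6}")
    case True
    then show ?thesis using six[of x] assms(3) by (auto simp: fl_def I6_def)
  next
    case False
    then show ?thesis using permutes_not_in[OF assms(1)] permutes_not_in[OF assms(2)] by simp
  qed
qed

lemma fl_id: "fl id = I6" by (simp add: fl_def I6_def)

lemma valid_set: assumes "valid t" shows "set t = {1..6}"
proof -
  have "set t \<subseteq> {1..6}" using assms by (auto simp: valid_def)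
  moreover have "card (set t) = card {1..(6::nat)}" using assms by (simp add: valid_def distinct_card)
  ultimately show ?thesis by (simp add: card_subset_eq)
qed

lemma toF_perm: assumes "valid t" shows "toF t permutes {1..6}"
proof (rule bij_imp_permutes)
  have inj: "inj_on (toF t) {1..6}"
  proof (rule inj_onI)
    fix x y :: nat assume xy: "x \<in> {1..6}" "y \<in> {1..6}" "toF t x = toF t y"
    then have "t ! (x - 1) = t ! (y - 1)" by (simp add: toF_def ap_def)
    moreover have "x - 1 < length t" "y - 1 < length t" using xy assms by (auto simp: valid_def)
    moreover have "distinct t" using assms by (simp add: valid_def)
    ultimately have "x - 1 = y - 1" using nth_eq_iff_index_eq by metis
    then show "x = y" using xy by auto
  qed
  have "toF t ` {1..6} \<subseteq> {1..6}"
  proof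
    fix z assume "z \<in> toF t ` {1..6}"
    then obtain x where x: "x \<in> {1..6}" "z = t ! (x - 1)" by (auto simp: toF_def ap_def)
    then have "x - 1 < length t" using assms by (auto simp: valid_def)
    then have "z \<in> set t" using x by simp
    then show "z \<in> {1..6}" using valid_set[OF assms] by simp
  qed
  then have "toF t ` {1..6} = {1..6}" using endo_inj_surj[OF _ _ inj] by simp
  then show "bij_betw (toF t) {1..6} {1..6}" using inj by (simp add: bij_betw_def)
  show "\<And>x. x \<notin> {1..6} \<Longrightarrow> toF t x = x" by (auto simp: toF_def)
qed

lemma fl_toF: assumes "length t = 6" shows "fl (toF t) = t"
proof -
  obtain a b c d e g where "t = [a,b,c,d,e,g]" using assms
    by (cases t; simp; rename_tac l; case_tac l; simp; rename_tac l; case_tac l; simp;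
        rename_tac l; case_tac l; simp; rename_tac l; case_tac l; simp; rename_tac l; case_tac l; simp)
  then show ?thesis by (simp add: fl_def I6_def toF_def ap_def)
qed

lemma toF_fl: assumes "f permutes {1..6}" shows "toF (fl f) = f"
proof
  fix x show "toF (fl f) x = f x"
    using ap_fl[of x f] permutes_not_in[OF assms, of x] by (auto simp: toF_def)
qed

lemma fl_valid: assumes "f permutes {1..6}" shows "valid (fl f)"
proof -
  have "inj f" using permutes_inj[OF assms] .
  then have "inj_on f (set I6)" by (meson inj_on_subset subset_UNIV)
  then have "distinct (map f I6)" by (simp add: distinct_map) (simp add: I6_def)
  moreover have "\<forall>i\<in>set (map f I6). 1 \<le> i \<and> i \<le> 6"
    using permutes_in_image[OF assms] by (auto simp: I6_def)
  ultimately show ?thesis by (simp add: valid_def fl_def I6_def)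
qed

lemma toF_mult: assumes "valid x" "valid y" shows "toF x \<circ> toF y = toF (lc x y)"
proof -
  have px: "toF x permutes {1..6}" and py: "toF y permutes {1..6}" using toF_perm assms by auto
  have e: "fl (toF x \<circ> toF y) = lc x y"
    using fl_comp[OF py, of "toF x"] fl_toF assms by (simp add: valid_def)
  have "valid (lc x y)" using fl_valid[OF permutes_compose[OF py px]] e by simp
  then have "toF (lc x y) permutes {1..6}" by (rule toF_perm)
  moreover have "fl (toF (lc x y)) = lc x y" by (rule fl_toF) (simp add: lc_def valid_def assms(2)[unfolded valid_def])
  ultimately show ?thesis using fl_inj[OF permutes_compose[OF py px]] e by metis
qed

lemma lc_valid: assumes "valid x" "valid y" shows "valid (lc x y)"
proof -
  have "fl (toF x \<circ> toF y) = lc x y"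
    using fl_comp[OF toF_perm[OF assms(2)], of "toF x"] fl_toF assms by (simp add: valid_def)
  then show ?thesis using fl_valid[OF permutes_compose[OF toF_perm[OF assms(2)] toF_perm[OF assms(1)]]] by simp
qed

lemma toF_I6: "toF I6 = id"
proof
  fix x show "toF I6 x = id x" using six[of x] by (auto simp: toF_def I6_def ap_def)
qed

lemma valid_I6: "valid I6" by (simp add: valid_def I6_def)

lemma cube_fl: fixes w :: "nat \<Rightarrow> nat" assumes "w permutes {1..6}" "\<And>z. w (w (w z)) = z" shows "cube (fl w) = I6"
proof -
  have "w \<circ> (w \<circ> w) = id" using assms(2) by (simp add: fun_eq_iff)
  then have "fl (w \<circ> (w \<circ> w)) = I6" by (simp add: fl_id)
  moreover have "fl (w \<circ> (w \<circ> w)) = lc (fl w) (lc (fl w) (fl w))"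
    using fl_comp[OF permutes_compose[OF assms(1) assms(1)]] fl_comp[OF assms(1)] by simp
  ultimately show ?thesis by (simp add: cube_def)
qed

lemma nid_fl: fixes w :: "nat \<Rightarrow> nat" assumes "w permutes {1..6}" "w \<noteq> id" shows "fl w \<noteq> I6"
  using fl_inj[OF assms(1) permutes_id] assms(2) fl_id by metis

lemma ni_of: fixes f :: "nat \<Rightarrow> nat" assumes "f permutes {1..6}" "f \<noteq> id"
  shows "f 1 \<noteq> 1 \<or> f 2 \<noteq> 2 \<or> f 3 \<noteq> 3 \<or> f 4 \<noteq> 4 \<or> f 5 \<noteq> 5 \<or> f 6 \<noteq> 6"
proof (rule ccontr)
  assume "\<not> ?thesis"
  then have "fl f = I6" by (simp add: fl_def I6_def)
  then show False using nid_fl assms by blast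
qed
lemma order_S6: "order (sym_group 6) = 720"
  by (simp add: order_def sym_group_card_carrier fact_numeral)

lemma mult_720: "multiplicity (3::nat) 720 = 2"
  by (rule multiplicity_eqI) auto

lemma sylow_iff: "sylow_subgroup 3 (sym_group 6) H \<longleftrightarrow> subgroup H (sym_group 6) \<and> card H = 9"
  by (simp add: sylow_subgroup_def order_S6 mult_720)

lemma subgroup_list:
  assumes v: "\<forall>x\<in>set S. valid x \<and> cube x = I6" and cl: "\<forall>x\<in>set S. \<forall>y\<in>set S. lc x y \<in> set S"
    and ne: "S \<noteq> []"
  shows "subgroup (toF ` set S) (sym_group 6)"
proof -
  interpret G: group "sym_group 6" by (rule sym_group_is_group)
  show ?thesis
  proof (rule G.subgroupI)
    show "toF ` set S \<subseteq> carrier (sym_group 6)"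
      using v toF_perm by (auto simp: sym_group_carrier)
    show "toF ` set S \<noteq> {}" using ne by simp
  next
    fix a b assume "a \<in> toF ` set S" "b \<in> toF ` set S"
    then obtain x y where xy: "x \<in> set S" "y \<in> set S" "a = toF x" "b = toF y" by auto
    then have "a \<otimes>\<^bsub>sym_group 6\<^esub> b = toF (lc x y)" using v toF_mult by (simp add: sym_group_mult)
    then show "a \<otimes>\<^bsub>sym_group 6\<^esub> b \<in> toF ` set S" using cl xy by auto
  next
    fix a assume "a \<in> toF ` set S"
    then obtain x where x: "x \<in> set S" "a = toF x" by auto
    have vx: "valid x" and cx: "cube x = I6" using v x by auto
    have a2: "toF x \<circ> toF x = toF (lc x x)" using toF_mult vx by simp
    have a3: "toF x \<circ> toF (lc x x) = id"
      using toF_mult[OF vx lc_valid[OF vx vx]] cx toF_I6 by (simp add: cube_def)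
    have "inv\<^bsub>sym_group 6\<^esub> a = toF (lc x x)"
    proof (rule G.inv_equality)
      show "toF (lc x x) \<otimes>\<^bsub>sym_group 6\<^esub> a = \<one>\<^bsub>sym_group 6\<^esub>"
        using a2 a3 x by (simp add: sym_group_mult sym_group_one) (metis comp_assoc)
      show "a \<in> carrier (sym_group 6)" using x vx toF_perm by (simp add: sym_group_carrier)
      show "toF (lc x x) \<in> carrier (sym_group 6)" using lc_valid[OF vx vx] toF_perm by (simp add: sym_group_carrier)
    qed
    then show "inv\<^bsub>sym_group 6\<^esub> a \<in> toF ` set S" using cl x by auto
  qed
qed

lemma conj_sylow:
  assumes H: "sylow_subgroup 3 (sym_group 6) H" and ps: "s permutes {1..6}" and ps': "s' permutes {1..6}"
    and i1: "\<And>x. s (s' x) = x" and i2: "\<And>x. s' (s x) = x"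
  shows "sylow_subgroup 3 (sym_group 6) ((\<lambda>f. s \<circ> f \<circ> s') ` H)"
proof -
  let ?h = "\<lambda>f. s \<circ> f \<circ> s'"
  have hom: "group_hom (sym_group 6) (sym_group 6) ?h"
  proof -
    have "?h \<in> hom (sym_group 6) (sym_group 6)"
    proof (rule homI)
      fix x assume "x \<in> carrier (sym_group 6)"
      then show "?h x \<in> carrier (sym_group 6)"
        using ps ps' by (simp add: sym_group_carrier permutes_compose)
    next
      fix x y
      show "?h (x \<otimes>\<^bsub>sym_group 6\<^esub> y) = ?h x \<otimes>\<^bsub>sym_group 6\<^esub> ?h y"
        by (simp add: sym_group_mult fun_eq_iff i2)
    qed
    then show ?thesis
      by (simp add: group_hom_def group_hom_axioms_def sym_group_is_group)
  qed
  have sub: "subgroup H (sym_group 6)" and c9: "card H = 9" using H by (auto simp: sylow_iff)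
  have "subgroup (?h ` H) (sym_group 6)" using group_hom.subgroup_img_is_subgroup[OF hom sub] .
  moreover have "inj_on ?h H"
  proof (rule inj_onI)
    fix x y assume "?h x = ?h y"
    then have "\<And>z. s (x (s' z)) = s (y (s' z))" by (simp add: fun_eq_iff)
    then have "\<And>z. s' (s (x (s' (s z)))) = s' (s (y (s' (s z))))" by metis
    then show "x = y" by (simp add: i2 fun_eq_iff)
  qed
  then have "card (?h ` H) = 9" using c9 card_image by metis
  ultimately show ?thesis by (simp add: sylow_iff)
qed

lemma ord3:
  assumes "x \<in> carrier (sym_group 6)" "group.ord (sym_group 6) x = 3"
  shows "\<And>z. x (x (x z)) = z" "x \<noteq> id"
proof -
  interpret G: group "sym_group 6" by (rule sym_group_is_group)
  have "x [^]\<^bsub>sym_group 6\<^esub> (3::nat) = \<one>\<^bsub>sym_group 6\<^esub>" using G.pow_ord_eq_1[OF assms(1)] assms(2) by simp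
  then have "x \<circ> x \<circ> x = id" by (simp add: numeral_3_eq_3 sym_group_mult sym_group_one)
  then show "\<And>z. x (x (x z)) = z" by (simp add: fun_eq_iff)
  show "x \<noteq> id"
  proof
    assume "x = id"
    then have "group.ord (sym_group 6) x = 1" using G.ord_id by (simp add: sym_group_one)
    then show False using assms(2) by simp
  qed
qed

lemma enumB:
  assumes "f permutes {1..6}" "\<And>z. f (f (f z)) = z" "f \<noteq> id"
  shows "fl f \<in> set O3"
  using enumA[OF assms(1,2) ni_of[OF assms(1,3)]] by (simp add: fl_def)

lemma sylP0: "sylow_subgroup 3 (sym_group 6) (toF ` set P0)"
proof -
  have "subgroup (toF ` set P0) (sym_group 6)"
    using C3 by (intro subgroup_list) auto
  moreover have "inj_on toF (set P0)"
  proof (rule inj_onI)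
    fix x y assume "x \<in> set P0" "y \<in> set P0" "toF x = toF y"
    then show "x = y" using C3 fl_toF by (metis valid_def)
  qed
  then have "card (toF ` set P0) = 9" using C3 by (simp add: card_image distinct_card)
  ultimately show ?thesis by (simp add: sylow_iff)
qed
theorem lemma4:
  fixes \<alpha> \<beta> :: "nat \<Rightarrow> nat"
  assumes "\<alpha> \<in> carrier (sym_group 6)" and "\<beta> \<in> carrier (sym_group 6)"
    and "group.ord (sym_group 6) \<alpha> = 3" and "group.ord (sym_group 6) \<beta> = 3"
    and "\<not> (\<exists>H. sylow_subgroup 3 (sym_group 6) H \<and> \<alpha> \<in> H \<and> \<beta> \<in> H)"
  shows "group.ord (sym_group 6) (\<alpha> \<otimes>\<^bsub>sym_group 6\<^esub> \<beta>) \<noteq> 3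
       \<or> group.ord (sym_group 6) (\<alpha> \<otimes>\<^bsub>sym_group 6\<^esub> (\<beta> [^]\<^bsub>sym_group 6\<^esub> (2::nat))) \<noteq> 3"
proof (rule ccontr)
  assume "\<not> ?thesis"
  then have o1: "group.ord (sym_group 6) (\<alpha> \<circ> \<beta>) = 3"
    and o2: "group.ord (sym_group 6) (\<alpha> \<circ> (\<beta> \<circ> \<beta>)) = 3"
    by (simp_all add: sym_group_mult sym_group_one numeral_2_eq_2)
  have pa: "\<alpha> permutes {1..6}" and pb: "\<beta> permutes {1..6}" using assms(1,2) by (simp_all add: sym_group_carrier)
  have ca: "\<And>z. \<alpha> (\<alpha> (\<alpha> z)) = z" and na: "\<alpha> \<noteq> id" using ord3 assms(1,3) by auto
  have cb: "\<And>z. \<beta> (\<beta> (\<beta> z)) = z" and nb: "\<beta> \<noteq> id" using ord3 assms(2,4) by auto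
  have pab: "\<alpha> \<circ> \<beta> permutes {1..6}" using permutes_compose[OF pb pa] .
  have pabb: "\<alpha> \<circ> (\<beta> \<circ> \<beta>) permutes {1..6}" using permutes_compose[OF permutes_compose[OF pb pb] pa] .
  have c1: "\<And>z. (\<alpha> \<circ> \<beta>) ((\<alpha> \<circ> \<beta>) ((\<alpha> \<circ> \<beta>) z)) = z" and n1: "\<alpha> \<circ> \<beta> \<noteq> id"
    using ord3[of "\<alpha> \<circ> \<beta>"] o1 pab by (auto simp: sym_group_carrier)
  have c2: "\<And>z. (\<alpha> \<circ> (\<beta> \<circ> \<beta>)) ((\<alpha> \<circ> (\<beta> \<circ> \<beta>)) ((\<alpha> \<circ> (\<beta> \<circ> \<beta>)) z)) = z" and n2: "\<alpha> \<circ> (\<beta> \<circ> \<beta>) \<noteq> id"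
    using ord3[of "\<alpha> \<circ> (\<beta> \<circ> \<beta>)"] o2 pabb by (auto simp: sym_group_carrier)
  have aO: "fl \<alpha> \<in> set O3" using enumB[OF pa ca na] .
  then obtain i where i: "i < length O3" "O3 ! i = fl \<alpha>" by (auto simp: in_set_conv_nth)
  define t where "t = TT ! i"
  have tprop: "valid t \<and> (lc (fl \<alpha>) t = lc t c1l \<or> lc (fl \<alpha>) t = lc t c2l)"
    using C1 i unfolding t_def list_all2_conv_all_nth by metis
  obtain cl where cl: "cl = c1l \<or> cl = c2l" "lc (fl \<alpha>) t = lc t cl" using tprop by blast
  have vt: "valid t" using tprop by blast
  have vcl: "valid cl" using cl(1) by (auto simp: valid_def c1l_def c2l_def)
  define \<tau> where "\<tau> = toF t"
  define c where "c = toF cl"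
  have pt: "\<tau> permutes {1..6}" using toF_perm[OF vt] by (simp add: \<tau>_def)
  have pc: "c permutes {1..6}" using toF_perm[OF vcl] by (simp add: c_def)
  have flt: "fl \<tau> = t" using fl_toF vt by (simp add: \<tau>_def valid_def)
  have flc: "fl c = cl" using fl_toF vcl by (simp add: c_def valid_def)
  have ac: "\<alpha> \<circ> \<tau> = \<tau> \<circ> c"
  proof (rule fl_inj)
    show "\<alpha> \<circ> \<tau> permutes {1..6}" using permutes_compose[OF pt pa] .
    show "\<tau> \<circ> c permutes {1..6}" using permutes_compose[OF pc pt] .
    show "fl (\<alpha> \<circ> \<tau>) = fl (\<tau> \<circ> c)" using fl_comp[OF pt] fl_comp[OF pc] flt flc cl(2) by simp
  qed
  define \<tau>' where "\<tau>' = Hilbert_Choice.inv \<tau>"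
  have pt': "\<tau>' permutes {1..6}" using permutes_inv[OF pt] by (simp add: \<tau>'_def)
  have i1: "\<And>x. \<tau> (\<tau>' x) = x" and i2: "\<And>x. \<tau>' (\<tau> x) = x"
    using permutes_inverses[OF pt] by (simp_all add: \<tau>'_def)
  have cdef: "\<And>z. c z = \<tau>' (\<alpha> (\<tau> z))"
  proof -
    fix z have "\<alpha> (\<tau> z) = \<tau> (c z)" using ac by (metis comp_apply)
    then show "c z = \<tau>' (\<alpha> (\<tau> z))" using i2 by simp
  qed
  define \<beta>' where "\<beta>' = \<tau>' \<circ> \<beta> \<circ> \<tau>"
  have pb': "\<beta>' permutes {1..6}" unfolding \<beta>'_def by (intro permutes_compose pt pt' pb)
  have cb': "\<And>z. \<beta>' (\<beta>' (\<beta>' z)) = z" by (simp add: \<beta>'_def i1 i2 cb)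
  have nb': "\<beta>' \<noteq> id"
  proof
    assume "\<beta>' = id"
    then have "\<And>z. \<tau>' (\<beta> (\<tau> z)) = z" by (simp add: \<beta>'_def fun_eq_iff)
    then have "\<And>z. \<tau> (\<tau>' (\<beta> (\<tau> (\<tau>' z)))) = \<tau> (\<tau>' z)" by metis
    then have "\<beta> = id" by (simp add: i1 fun_eq_iff)
    then show False using nb by simp
  qed
  have e1: "c \<circ> \<beta>' = \<tau>' \<circ> (\<alpha> \<circ> \<beta>) \<circ> \<tau>" by (simp add: fun_eq_iff cdef \<beta>'_def i1)
  have e2: "c \<circ> (\<beta>' \<circ> \<beta>') = \<tau>' \<circ> (\<alpha> \<circ> (\<beta> \<circ> \<beta>)) \<circ> \<tau>" by (simp add: fun_eq_iff cdef \<beta>'_def i1)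
  have conjc: "\<And>w. (\<And>z. w (w (w z)) = z) \<Longrightarrow> (\<And>z. (\<tau>' \<circ> w \<circ> \<tau>) ((\<tau>' \<circ> w \<circ> \<tau>) ((\<tau>' \<circ> w \<circ> \<tau>) z)) = z)"
    by (simp add: i1 i2)
  have conjn: "\<And>w. w \<noteq> id \<Longrightarrow> \<tau>' \<circ> w \<circ> \<tau> \<noteq> id"
  proof
    fix w :: "nat \<Rightarrow> nat" assume "w \<noteq> id" "\<tau>' \<circ> w \<circ> \<tau> = id"
    then have "\<And>z. \<tau>' (w (\<tau> z)) = z" by (simp add: fun_eq_iff)
    then have "\<And>z. \<tau> (\<tau>' (w (\<tau> (\<tau>' z)))) = \<tau> (\<tau>' z)" by metis
    then have "w = id" by (simp add: i1 fun_eq_iff)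
    then show False using \<open>w \<noteq> id\<close> by simp
  qed
  have pcb: "c \<circ> \<beta>' permutes {1..6}" using permutes_compose[OF pb' pc] .
  have pcbb: "c \<circ> (\<beta>' \<circ> \<beta>') permutes {1..6}" using permutes_compose[OF permutes_compose[OF pb' pb'] pc] .
  have cc1: "\<And>z. (c \<circ> \<beta>') ((c \<circ> \<beta>') ((c \<circ> \<beta>') z)) = z" unfolding e1 by (rule conjc[OF c1])
  have cc2: "\<And>z. (c \<circ> (\<beta>' \<circ> \<beta>')) ((c \<circ> (\<beta>' \<circ> \<beta>')) ((c \<circ> (\<beta>' \<circ> \<beta>')) z)) = z" unfolding e2 by (rule conjc[OF c2])
  have nc1: "c \<circ> \<beta>' \<noteq> id" unfolding e1 by (rule conjn[OF n1])
  have nc2: "c \<circ> (\<beta>' \<circ> \<beta>') \<noteq> id" unfolding e2 by (rule conjn[OF n2])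
  define b where "b = fl \<beta>'"
  have bO: "b \<in> set O3" unfolding b_def by (rule enumB[OF pb' cb' nb'])
  have l1: "lc cl b = fl (c \<circ> \<beta>')" using fl_comp[OF pb'] flc by (simp add: b_def)
  have l2: "lc cl (lc b b) = fl (c \<circ> (\<beta>' \<circ> \<beta>'))"
    using fl_comp[OF permutes_compose[OF pb' pb']] fl_comp[OF pb'] flc by (simp add: b_def)
  have cond: "cube (lc cl b) = I6 \<and> lc cl b \<noteq> I6 \<and> cube (lc cl (lc b b)) = I6 \<and> lc cl (lc b b) \<noteq> I6"
    unfolding l1 l2 using cube_fl[OF pcb cc1] cube_fl[OF pcbb cc2] nid_fl[OF pcb nc1] nid_fl[OF pcbb nc2] by blast
  obtain S where S: "S \<in> set SYL" "cl \<in> set S" "b \<in> set S"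
    using cl(1) C2a C2b bO cond by blast
  then obtain k where k: "k < length SYL" "SYL ! k = S" by (auto simp: in_set_conv_nth)
  define s where "s = SG ! k"
  define si where "si = SGI ! k"
  have l0: "length SG = length SGI" using C4 list_all2_lengthD by blast
  have sy: "SYL = map2 (\<lambda>s si. map (\<lambda>x. lc s (lc x si)) P0) SG SGI" using C4 by blast
  have lens: "length SG = length SGI" "length SYL = length SG" using l0 by (simp_all add: sy[symmetric]) (simp add: sy)
  have sprop: "valid s \<and> valid si \<and> lc s si = I6 \<and> lc si s = I6"
    using C4 k lens unfolding s_def si_def list_all2_conv_all_nth by metis
  have Sdef: "S = map (\<lambda>x. lc s (lc x si)) P0"
    using k lens by (simp add: s_def si_def sy[symmetric]) (simp add: sy)
  have vs: "valid s" and vsi: "valid si" using sprop by auto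
  define \<sigma> where "\<sigma> = toF s"
  define \<sigma>' where "\<sigma>' = toF si"
  have ps: "\<sigma> permutes {1..6}" and ps': "\<sigma>' permutes {1..6}" using toF_perm vs vsi by (simp_all add: \<sigma>_def \<sigma>'_def)
  have "\<sigma> \<circ> \<sigma>' = id" using toF_mult[OF vs vsi] sprop toF_I6 by (simp add: \<sigma>_def \<sigma>'_def)
  then have j1: "\<And>x. \<sigma> (\<sigma>' x) = x" by (simp add: fun_eq_iff)
  have "\<sigma>' \<circ> \<sigma> = id" using toF_mult[OF vsi vs] sprop toF_I6 by (simp add: \<sigma>_def \<sigma>'_def)
  then have j2: "\<And>x. \<sigma>' (\<sigma> x) = x" by (simp add: fun_eq_iff)
  have Keq: "toF ` set S = (\<lambda>f. \<sigma> \<circ> f \<circ> \<sigma>') ` (toF ` set P0)"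
  proof -
    have "\<And>x. x \<in> set P0 \<Longrightarrow> toF (lc s (lc x si)) = \<sigma> \<circ> toF x \<circ> \<sigma>'"
    proof -
      fix x assume "x \<in> set P0"
      then have vx: "valid x" using C3 by auto
      have "toF (lc s (lc x si)) = toF s \<circ> toF (lc x si)" using toF_mult[OF vs lc_valid[OF vx vsi]] by simp
      also have "\<dots> = toF s \<circ> (toF x \<circ> toF si)" using toF_mult[OF vx vsi] by simp
      finally show "toF (lc s (lc x si)) = \<sigma> \<circ> toF x \<circ> \<sigma>'" by (simp add: \<sigma>_def \<sigma>'_def comp_assoc)
    qed
    then show ?thesis unfolding Sdef by (auto simp: image_image intro!: image_cong)
  qed
  have sylK: "sylow_subgroup 3 (sym_group 6) (toF ` set S)"
    unfolding Keq by (rule conj_sylow[OF sylP0 ps ps' j1 j2])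
  define H where "H = (\<lambda>f. \<tau> \<circ> f \<circ> \<tau>') ` (toF ` set S)"
  have sylH: "sylow_subgroup 3 (sym_group 6) H"
    unfolding H_def by (rule conj_sylow[OF sylK pt pt' i1 i2])
  have "c \<in> toF ` set S" using S(2) by (simp add: c_def)
  moreover have "\<alpha> = \<tau> \<circ> c \<circ> \<tau>'" by (simp add: fun_eq_iff cdef i1)
  ultimately have aH: "\<alpha> \<in> H" unfolding H_def by blast
  have "\<beta>' \<in> toF ` set S" using S(3) toF_fl[OF pb'] by (metis b_def image_eqI)
  moreover have "\<beta> = \<tau> \<circ> \<beta>' \<circ> \<tau>'" by (simp add: fun_eq_iff \<beta>'_def i1)
  ultimately have bH: "\<beta> \<in> H" unfolding H_def by blast
  show False using assms(5) sylH aH bH by blast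
qed
end
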